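(* To first order in $\theta$, with $\phi_2=\partial_i\pi^i-J^0+\tfrac12\theta^{kl}\partial_l(A_kJ^0)$ and $\Phi_3^{\rm cand}=-C+\theta^{li}(\partial_iJ^0)\partial_lA_0+\theta^{li}\partial_i(J^k\partial_lA_k)-\tfrac12\theta^{il}\partial_i(A_lC)$, $C:=\partial_\mu J^\mu$, one has $$\{\phi_2(x),\Phi_3^{\rm cand}(y)\}=\Sigma^{lk}(y)\,\partial^y_l\partial^y_k\delta^3(x-y)-\tfrac12\theta^{il}(\partial_iC)(y)\,\partial^y_l\delta^3(x-y),$$ where $\Sigma^{lk}:=\tfrac12\bigl(\theta^{li}\partial_iJ^k+\theta^{ki}\partial_iJ^l\bigr)$.
   Context: Greek indices $0..3$, Latin indices $1..3$, summation convention. $\theta^{ij}$ constant antisymmetric (with $\theta^{0i}=0$). $J^\mu$ a prescribed smooth external current, not assumed conserved. Canonical fields $A_\mu,\pi^\mu$ with $\{A_\mu(x),\pi^\nu(y)\}=\delta^\nu_\mu\delta^3(x-y)$ and all other basic brackets zero; boundary terms are discarded. *)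

theory Defs
  imports "HOL-Analysis.Analysis"
begin

text \<open>Spatial points are real^3, spacetime points are real \<times> (real^3)
  with (t, x), time direction (1,0), spatial direction i is (0, axis i 1).\<close>

definition dd :: "'a::euclidean_space \<Rightarrow> ('a \<Rightarrow> real) \<Rightarrow> 'a \<Rightarrow> real" where
  "dd v f = (\<lambda>x. frechet_derivative f (at x) v)"

definition smooth_fn :: "('a::euclidean_space \<Rightarrow> real) \<Rightarrow> bool" where
  "smooth_fn f \<longleftrightarrow> (\<forall>vs. set vs \<subseteq> Basis \<longrightarrow> (\<forall>x. foldr dd vs f differentiable (at x)))"

definition test_fn :: "('a::euclidean_space \<Rightarrow> real) \<Rightarrow> bool" where
  "test_fn h \<longleftrightarrow> smooth_fn h \<and> bounded {x. h x \<noteq> 0}"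

definition sp :: "3 \<Rightarrow> (real^3 \<Rightarrow> real) \<Rightarrow> real^3 \<Rightarrow> real" where
  "sp i f = dd (axis i 1) f"

text \<open>A phase-space point at fixed time: A_0, A_i, pi^0, pi^i as fields on R^3.\<close>
record fstate =
  fA0 :: "real^3 \<Rightarrow> real"
  fA  :: "3 \<Rightarrow> real^3 \<Rightarrow> real"
  fP0 :: "real^3 \<Rightarrow> real"
  fP  :: "3 \<Rightarrow> real^3 \<Rightarrow> real"

definition smooth_state :: "fstate \<Rightarrow> bool" where
  "smooth_state s \<longleftrightarrow> smooth_fn (fA0 s) \<and> (\<forall>i. smooth_fn (fA s i))
      \<and> smooth_fn (fP0 s) \<and> (\<forall>i. smooth_fn (fP s i))"

definition test_state :: "fstate \<Rightarrow> bool" where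
  "test_state d \<longleftrightarrow> test_fn (fA0 d) \<and> (\<forall>i. test_fn (fA d i))
      \<and> test_fn (fP0 d) \<and> (\<forall>i. test_fn (fP d i))"

definition cont_state :: "fstate \<Rightarrow> bool" where
  "cont_state s \<longleftrightarrow> continuous_on UNIV (fA0 s) \<and> (\<forall>i. continuous_on UNIV (fA s i))
      \<and> continuous_on UNIV (fP0 s) \<and> (\<forall>i. continuous_on UNIV (fP s i))"

definition shift_state :: "fstate \<Rightarrow> real \<Rightarrow> fstate \<Rightarrow> fstate" where
  "shift_state s e d =
     \<lparr> fA0 = (\<lambda>x. fA0 s x + e * fA0 d x), fA = (\<lambda>i x. fA s i x + e * fA d i x),
       fP0 = (\<lambda>x. fP0 s x + e * fP0 d x), fP = (\<lambda>i x. fP s i x + e * fP d i x) \<rparr>"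

definition pair_state :: "fstate \<Rightarrow> fstate \<Rightarrow> real" where
  "pair_state D d = integral UNIV (\<lambda>z. fA0 D z * fA0 d z + (\<Sum>i\<in>UNIV. fA D i z * fA d i z)
      + fP0 D z * fP0 d z + (\<Sum>i\<in>UNIV. fP D i z * fP d i z))"

text \<open>D collects the functional derivatives (dF/dA_0, dF/dA_i, dF/dpi^0, dF/dpi^i) of the
  functional F at s: continuous, and representing the Gateaux derivative in every test direction.\<close>
definition is_fgrad :: "(fstate \<Rightarrow> real) \<Rightarrow> fstate \<Rightarrow> fstate \<Rightarrow> bool" where
  "is_fgrad F s D \<longleftrightarrow> cont_state D \<and>
     (\<forall>d. test_state d \<longrightarrow> ((\<lambda>e. F (shift_state s e d)) has_real_derivative pair_state D d) (at 0))"

definition fgrad :: "(fstate \<Rightarrow> real) \<Rightarrow> fstate \<Rightarrow> fstate" where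
  "fgrad F s = (THE D. is_fgrad F s D)"

text \<open>Canonical Poisson bracket {F,G} = int (dF/dA_mu dG/dpi^mu - dF/dpi^mu dG/dA_mu),
  so that {A_mu(x), pi^nu(y)} = delta^nu_mu delta^3(x-y).\<close>
definition pbracket :: "(fstate \<Rightarrow> real) \<Rightarrow> (fstate \<Rightarrow> real) \<Rightarrow> fstate \<Rightarrow> real" where
  "pbracket F G s = (let DF = fgrad F s; DG = fgrad G s in
     integral UNIV (\<lambda>z. fA0 DF z * fP0 DG z - fP0 DF z * fA0 DG z
        + (\<Sum>i\<in>UNIV. fA DF i z * fP DG i z - fP DF i z * fA DG i z)))"

definition smear :: "(real^3 \<Rightarrow> real) \<Rightarrow> (fstate \<Rightarrow> real^3 \<Rightarrow> real) \<Rightarrow> fstate \<Rightarrow> real" where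
  "smear f rho s = integral UNIV (\<lambda>x. f x * rho s x)"

definition divJ :: "(real \<times> (real^3) \<Rightarrow> real) \<Rightarrow> (3 \<Rightarrow> real \<times> (real^3) \<Rightarrow> real) \<Rightarrow> real \<times> (real^3) \<Rightarrow> real" where
  "divJ J0 J q = dd (1, 0) J0 q + (\<Sum>i\<in>UNIV. dd (0, axis i 1) (J i) q)"

definition phi2 :: "real^3^3 \<Rightarrow> (real \<times> (real^3) \<Rightarrow> real) \<Rightarrow> real \<Rightarrow> fstate \<Rightarrow> real^3 \<Rightarrow> real" where
  "phi2 \<theta> J0 t s x =
     (\<Sum>i\<in>UNIV. sp i (fP s i) x) - J0 (t, x)
     + (1/2) * (\<Sum>k\<in>UNIV. \<Sum>l\<in>UNIV. \<theta> $ k $ l * sp l (\<lambda>y. fA s k y * J0 (t, y)) x)"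

definition Phi3 :: "real^3^3 \<Rightarrow> (real \<times> (real^3) \<Rightarrow> real) \<Rightarrow> (3 \<Rightarrow> real \<times> (real^3) \<Rightarrow> real)
     \<Rightarrow> real \<Rightarrow> fstate \<Rightarrow> real^3 \<Rightarrow> real" where
  "Phi3 \<theta> J0 J t s y =
     - divJ J0 J (t, y)
     + (\<Sum>l\<in>UNIV. \<Sum>i\<in>UNIV. \<theta> $ l $ i * sp i (\<lambda>z. J0 (t, z)) y * sp l (fA0 s) y)
     + (\<Sum>l\<in>UNIV. \<Sum>i\<in>UNIV. \<Sum>k\<in>UNIV.
          \<theta> $ l $ i * sp i (\<lambda>z. J k (t, z) * sp l (fA s k) z) y)
     - (1/2) * (\<Sum>i\<in>UNIV. \<Sum>l\<in>UNIV. \<theta> $ i $ l * sp i (\<lambda>z. fA s l z * divJ J0 J (t, z)) y)"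

definition Sigma :: "real^3^3 \<Rightarrow> (3 \<Rightarrow> real \<times> (real^3) \<Rightarrow> real) \<Rightarrow> real \<Rightarrow> 3 \<Rightarrow> 3 \<Rightarrow> real^3 \<Rightarrow> real" where
  "Sigma \<theta> J t l k y = (1/2) * (\<Sum>i\<in>UNIV. \<theta> $ l $ i * sp i (\<lambda>z. J k (t, z)) y
                                       + \<theta> $ k $ i * sp i (\<lambda>z. J l (t, z)) y)"

end

theory Submission
  imports Defs "HOL-Computational_Algebra.Polynomial"
begin


lemma dd_eq: "(f has_derivative f') (at x) \<Longrightarrow> dd v f x = f' v"
  by (simp add: dd_def frechet_derivative_at[symmetric])

lemma has_derivative_dd: "f differentiable (at x) \<Longrightarrow> (f has_derivative (\<lambda>v. dd v f x)) (at x)"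
  unfolding dd_def using frechet_derivative_works by (metis eta_contract_eq)

definition Sm :: "nat \<Rightarrow> ('a::euclidean_space \<Rightarrow> real) \<Rightarrow> bool" where
  "Sm n f \<longleftrightarrow> (\<forall>vs. length vs \<le> n \<longrightarrow> set vs \<subseteq> Basis \<longrightarrow> (\<forall>x. foldr dd vs f differentiable (at x)))"

lemma smooth_Sm: "smooth_fn f \<longleftrightarrow> (\<forall>n. Sm n f)"
  unfolding smooth_fn_def Sm_def by blast

lemma Sm_0: "Sm 0 f \<longleftrightarrow> (\<forall>x. f differentiable (at x))"
  unfolding Sm_def by auto

lemma Sm_Suc: "Sm (Suc n) f \<longleftrightarrow> (\<forall>x. f differentiable (at x)) \<and> (\<forall>v\<in>Basis. Sm n (dd v f))"
proof
  assume a: "Sm (Suc n) f"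
  have "\<forall>x. f differentiable (at x)" using a unfolding Sm_def
    by (metis empty_subsetI foldr_Nil id_apply list.set(1) list.size(3) zero_le)
  moreover have "Sm n (dd v f)" if v: "v \<in> Basis" for v
    unfolding Sm_def
  proof (intro allI impI)
    fix vs :: "'a list" and x assume "length vs \<le> n" "set vs \<subseteq> Basis"
    then have "length (vs @ [v]) \<le> Suc n" "set (vs @ [v]) \<subseteq> Basis" using v by auto
    then have "foldr dd (vs @ [v]) f differentiable (at x)" using a unfolding Sm_def by blast
    then show "foldr dd vs (dd v f) differentiable (at x)" by simp
  qed
  ultimately show "(\<forall>x. f differentiable (at x)) \<and> (\<forall>v\<in>Basis. Sm n (dd v f))" by blast
next
  assume a: "(\<forall>x. f differentiable (at x)) \<and> (\<forall>v\<in>Basis. Sm n (dd v f))"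
  show "Sm (Suc n) f" unfolding Sm_def
  proof (intro allI impI)
    fix vs :: "'a list" and x assume l: "length vs \<le> Suc n" and s: "set vs \<subseteq> Basis"
    show "foldr dd vs f differentiable (at x)"
    proof (cases vs rule: rev_exhaust)
      case Nil then show ?thesis using a by simp
    next
      case (snoc ws v)
      then have "v \<in> Basis" "set ws \<subseteq> Basis" "length ws \<le> n" using l s by auto
      then have "foldr dd ws (dd v f) differentiable (at x)" using a unfolding Sm_def by blast
      then show ?thesis using snoc by simp
    qed
  qed
qed

lemma Sm_mono: "Sm (Suc n) f \<Longrightarrow> Sm n f"
  unfolding Sm_def by auto

lemma smooth_iff: "smooth_fn f \<longleftrightarrow> (\<forall>x. f differentiable (at x)) \<and> (\<forall>v\<in>Basis. smooth_fn (dd v f))"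
  unfolding smooth_Sm
  by (metis Sm_Suc Sm_mono)

lemma smooth_diff: "smooth_fn f \<Longrightarrow> f differentiable (at x)"
  using smooth_iff by blast

lemma smooth_dd: "smooth_fn f \<Longrightarrow> v \<in> Basis \<Longrightarrow> smooth_fn (dd v f)"
  using smooth_iff by blast

lemma smooth_cont: "smooth_fn f \<Longrightarrow> continuous_on UNIV f"
  by (meson continuous_at_imp_continuous_on differentiable_imp_continuous_within smooth_diff)

lemma smooth_contx: "smooth_fn f \<Longrightarrow> isCont f x"
  by (simp add: differentiable_imp_continuous_within smooth_diff)

lemma dd_add_fun: "(\<And>x. f differentiable (at x)) \<Longrightarrow> (\<And>x. g differentiable (at x)) \<Longrightarrow>
   dd v (\<lambda>x. f x + g x) = (\<lambda>x. dd v f x + dd v g x)"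
proof
  fix x assume "\<And>x. f differentiable (at x)" "\<And>x. g differentiable (at x)"
  then have "((\<lambda>x. f x + g x) has_derivative (\<lambda>v. dd v f x + dd v g x)) (at x)"
    by (intro has_derivative_add has_derivative_dd)
  then show "dd v (\<lambda>x. f x + g x) x = dd v f x + dd v g x" by (rule dd_eq)
qed

lemma dd_diff_fun: "(\<And>x. f differentiable (at x)) \<Longrightarrow> (\<And>x. g differentiable (at x)) \<Longrightarrow>
   dd v (\<lambda>x. f x - g x) = (\<lambda>x. dd v f x - dd v g x)"
proof
  fix x assume "\<And>x. f differentiable (at x)" "\<And>x. g differentiable (at x)"
  then have "((\<lambda>x. f x - g x) has_derivative (\<lambda>v. dd v f x - dd v g x)) (at x)"
    by (intro has_derivative_diff has_derivative_dd)
  then show "dd v (\<lambda>x. f x - g x) x = dd v f x - dd v g x" by (rule dd_eq)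
qed

lemma dd_mult_fun: "(\<And>x. f differentiable (at x)) \<Longrightarrow> (\<And>x. g differentiable (at x)) \<Longrightarrow>
   dd v (\<lambda>x. f x * g x) = (\<lambda>x. dd v f x * g x + f x * dd v g x)"
proof
  fix x assume "\<And>x. f differentiable (at x)" "\<And>x. g differentiable (at x)"
  then have "((\<lambda>x. f x * g x) has_derivative (\<lambda>v. f x * dd v g x + dd v f x * g x)) (at x)"
    by (intro has_derivative_mult has_derivative_dd)
  then show "dd v (\<lambda>x. f x * g x) x = dd v f x * g x + f x * dd v g x" by (simp add: dd_eq)
qed

lemma dd_const_fun: fixes v :: "'a::euclidean_space" shows "dd v (\<lambda>x. c) = (\<lambda>x. 0)"
proof
  fix x :: 'a
  have "((\<lambda>x::'a. c) has_derivative (\<lambda>v. 0)) (at x)" by simp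
  then show "dd v (\<lambda>x. c) x = 0" by (rule dd_eq)
qed

lemma dd_cmult_fun: "(\<And>x. f differentiable (at x)) \<Longrightarrow> dd v (\<lambda>x. c * f x) = (\<lambda>x. c * dd v f x)"
proof
  fix x assume "\<And>x. f differentiable (at x)"
  then have "((\<lambda>x. c * f x) has_derivative (\<lambda>v. c * dd v f x)) (at x)"
    by (intro has_derivative_mult_right has_derivative_dd)
  then show "dd v (\<lambda>x. c * f x) x = c * dd v f x" by (rule dd_eq)
qed

lemma dd_sum_fun: "finite I \<Longrightarrow> (\<And>i x. i \<in> I \<Longrightarrow> f i differentiable (at x)) \<Longrightarrow>
   dd v (\<lambda>x. \<Sum>i\<in>I. f i x) = (\<lambda>x. \<Sum>i\<in>I. dd v (f i) x)"
proof
  fix x assume "finite I" "\<And>i x. i \<in> I \<Longrightarrow> f i differentiable (at x)"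
  then have "((\<lambda>x. \<Sum>i\<in>I. f i x) has_derivative (\<lambda>v. \<Sum>i\<in>I. dd v (f i) x)) (at x)"
    by (intro has_derivative_sum has_derivative_dd) auto
  then show "dd v (\<lambda>x. \<Sum>i\<in>I. f i x) x = (\<Sum>i\<in>I. dd v (f i) x)" by (rule dd_eq)
qed

lemma Sm_const: "Sm n (\<lambda>x. c)"
  by (induction n arbitrary: c) (auto simp: Sm_0 Sm_Suc dd_const_fun)

lemma Sm_diffble: "Sm n f \<Longrightarrow> f differentiable (at x)"
  by (cases n) (auto simp: Sm_0 Sm_Suc)

lemma Sm_add: "Sm n f \<Longrightarrow> Sm n g \<Longrightarrow> Sm n (\<lambda>x. f x + g x)"
proof (induction n arbitrary: f g)
  case 0 then show ?case by (auto simp: Sm_0)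
next
  case (Suc n)
  then show ?case using Sm_diffble[OF Suc.prems(1)] Sm_diffble[OF Suc.prems(2)]
    by (auto simp: Sm_Suc dd_add_fun)
qed

lemma Sm_diff: "Sm n f \<Longrightarrow> Sm n g \<Longrightarrow> Sm n (\<lambda>x. f x - g x)"
proof (induction n arbitrary: f g)
  case 0 then show ?case by (auto simp: Sm_0)
next
  case (Suc n)
  then show ?case using Sm_diffble[OF Suc.prems(1)] Sm_diffble[OF Suc.prems(2)]
    by (auto simp: Sm_Suc dd_diff_fun)
qed

lemma Sm_mult: "Sm n f \<Longrightarrow> Sm n g \<Longrightarrow> Sm n (\<lambda>x. f x * g x)"
proof (induction n arbitrary: f g)
  case 0 then show ?case by (auto simp: Sm_0)
next
  case (Suc n)
  have df: "\<And>x. f differentiable (at x)" and dg: "\<And>x. g differentiable (at x)"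
    using Sm_diffble[OF Suc.prems(1)] Sm_diffble[OF Suc.prems(2)] by auto
  show ?case unfolding Sm_Suc
  proof (intro conjI ballI allI)
    fix x show "(\<lambda>x. f x * g x) differentiable (at x)" using df dg by auto
  next
    fix v :: 'a assume v: "v \<in> Basis"
    have a: "Sm n (dd v f)" "Sm n (dd v g)" "Sm n f" "Sm n g"
      using Suc.prems v by (auto simp: Sm_Suc intro: Sm_mono)
    show "Sm n (dd v (\<lambda>x. f x * g x))" unfolding dd_mult_fun[OF df dg]
      by (intro Sm_add Suc.IH a)
  qed
qed

lemma Sm_sum: "finite I \<Longrightarrow> (\<And>i. i \<in> I \<Longrightarrow> Sm n (f i)) \<Longrightarrow> Sm n (\<lambda>x. \<Sum>i\<in>I. f i x)"
  by (induction I rule: finite_induct) (auto intro: Sm_add Sm_const)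

lemma smooth_const[simp]: "smooth_fn (\<lambda>x. c)" by (simp add: smooth_Sm Sm_const)
lemma smooth_add: "smooth_fn f \<Longrightarrow> smooth_fn g \<Longrightarrow> smooth_fn (\<lambda>x. f x + g x)"
  by (simp add: smooth_Sm Sm_add)
lemma smooth_diff_fn: "smooth_fn f \<Longrightarrow> smooth_fn g \<Longrightarrow> smooth_fn (\<lambda>x. f x - g x)"
  by (simp add: smooth_Sm Sm_diff)
lemma smooth_mult: "smooth_fn f \<Longrightarrow> smooth_fn g \<Longrightarrow> smooth_fn (\<lambda>x. f x * g x)"
  by (simp add: smooth_Sm Sm_mult)
lemma smooth_sum: "finite I \<Longrightarrow> (\<And>i. i \<in> I \<Longrightarrow> smooth_fn (f i)) \<Longrightarrow> smooth_fn (\<lambda>x. \<Sum>i\<in>I. f i x)"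
  by (simp add: smooth_Sm Sm_sum)
lemma smooth_cmult: "smooth_fn f \<Longrightarrow> smooth_fn (\<lambda>x. c * f x)"
  by (rule smooth_mult) auto
lemma smooth_uminus: "smooth_fn f \<Longrightarrow> smooth_fn (\<lambda>x. - f x)"
  using smooth_diff_fn[of "\<lambda>x. 0" f] by simp


lemma axis_Basis3[simp]: "axis i (1::real) \<in> (Basis :: (real^3) set)"
  by (simp add: Basis_vec_def) blast

lemma Basis3_iff: "v \<in> (Basis :: (real^3) set) \<longleftrightarrow> (\<exists>i. v = axis i 1)"
  by (auto simp: Basis_vec_def)

lemma smooth_sp: "smooth_fn f \<Longrightarrow> smooth_fn (sp i f)"
  unfolding sp_def by (rule smooth_dd) auto

lemma Basis_prod_0v: "v \<in> Basis \<Longrightarrow> ((0::'a::euclidean_space), v) \<in> (Basis :: ('a \<times> 'b::euclidean_space) set)"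
  by (auto simp: Basis_prod_def)

lemma Basis_prod_10: "((1::real), (0::'b::euclidean_space)) \<in> (Basis :: (real \<times> 'b) set)"
  by (auto simp: Basis_prod_def)

lemma slice_has_derivative:
  fixes K :: "'a::euclidean_space \<times> 'b::euclidean_space \<Rightarrow> real"
  assumes "K differentiable (at (t, z))"
  shows "((\<lambda>z. K (t, z)) has_derivative (\<lambda>h. dd (0, h) K (t, z))) (at z)"
proof -
  have e: "((\<lambda>z. (t, z)) has_derivative (\<lambda>h. (0, h))) (at z)"
    by (auto intro!: derivative_eq_intros)
  show ?thesis using has_derivative_compose[OF e has_derivative_dd[OF assms]] by simp
qed

lemma slice_dd:
  fixes K :: "'a::euclidean_space \<times> 'b::euclidean_space \<Rightarrow> real"
  assumes "\<And>z. K differentiable (at (t, z))"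
  shows "dd v (\<lambda>z. K (t, z)) = (\<lambda>z. dd (0, v) K (t, z))"
  using dd_eq[OF slice_has_derivative[OF assms]] by auto

lemma Sm_slice:
  fixes K :: "'a::euclidean_space \<times> 'b::euclidean_space \<Rightarrow> real"
  shows "Sm n K \<Longrightarrow> Sm n (\<lambda>z. K (t, z))"
proof (induction n arbitrary: K)
  case 0 then show ?case
    by (auto simp: Sm_0 intro: differentiableI[OF slice_has_derivative])
next
  case (Suc n)
  have d: "\<And>z. K differentiable (at (t, z))" using Suc.prems Sm_diffble by blast
  show ?case unfolding Sm_Suc
  proof (intro conjI allI ballI)
    fix z show "(\<lambda>z. K (t, z)) differentiable (at z)" using slice_has_derivative[OF d] differentiableI by blast
  next
    fix v :: 'b assume v: "v \<in> Basis"
    have "Sm n (dd (0, v) K)" using Suc.prems Basis_prod_0v[OF v, where 'a='a] by (auto simp: Sm_Suc)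
    then show "Sm n (dd v (\<lambda>z. K (t, z)))" unfolding slice_dd[OF d] by (rule Suc.IH)
  qed
qed

lemma smooth_slice: "smooth_fn K \<Longrightarrow> smooth_fn (\<lambda>z. K (t, z))"
  by (simp add: smooth_Sm Sm_slice)

lemma sp_slice: "smooth_fn (K :: real \<times> (real^3) \<Rightarrow> real) \<Longrightarrow> sp i (\<lambda>z. K (t, z)) = (\<lambda>z. dd (0, axis i 1) K (t, z))"
  unfolding sp_def by (rule slice_dd) (simp add: smooth_diff)

lemma smooth_divJ:
  assumes "smooth_fn J0" "\<And>k. smooth_fn (J k)"
  shows "smooth_fn (\<lambda>z. divJ J0 J (t, z))"
proof -
  have "smooth_fn (dd (1, 0) J0)" by (rule smooth_dd[OF assms(1) Basis_prod_10])
  moreover have "\<And>i. smooth_fn (dd (0, axis i 1) (J i))" by (rule smooth_dd[OF assms(2)]) (simp add: Basis_prod_0v)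
  ultimately show ?thesis unfolding divJ_def
    by (intro smooth_add smooth_sum smooth_slice) auto
qed

lemma dd_outside_support:
  fixes f :: "'a::euclidean_space \<Rightarrow> real"
  assumes "x \<notin> closure {x. f x \<noteq> 0}"
  shows "dd v f x = 0"
proof -
  define U where "U = - closure {x. f x \<noteq> 0}"
  have o: "open U" and xU: "x \<in> U" using assms by (auto simp: U_def)
  have eq: "\<And>y. y \<in> U \<Longrightarrow> (\<lambda>x. 0) y = f y"
  proof -
    fix y assume "y \<in> U"
    then have "y \<notin> closure {x. f x \<noteq> 0}" unfolding U_def by simp
    then have "y \<notin> {x. f x \<noteq> 0}" using closure_subset[of "{x. f x \<noteq> 0}"] by blast
    then show "(\<lambda>x. 0) y = f y" by simp
  qed
  have "((\<lambda>x. 0::real) has_derivative (\<lambda>h. 0)) (at x)" by simp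
  from has_derivative_transform_within_open[OF this o xU eq]
  have "(f has_derivative (\<lambda>h. 0)) (at x)" by simp
  from dd_eq[OF this] show ?thesis .
qed

lemma bounded_support_dd:
  fixes f :: "'a::euclidean_space \<Rightarrow> real"
  assumes "bounded {x. f x \<noteq> 0}"
  shows "bounded {x. dd v f x \<noteq> 0}"
proof -
  have "{x. dd v f x \<noteq> 0} \<subseteq> closure {x. f x \<noteq> 0}"
  proof
    fix y assume "y \<in> {x. dd v f x \<noteq> 0}"
    then show "y \<in> closure {x. f x \<noteq> 0}" using dd_outside_support[of y f v] by auto
  qed
  moreover have "bounded (closure {x. f x \<noteq> 0})" using assms by (rule bounded_closure)
  ultimately show ?thesis by (rule bounded_subset[rotated])
qed

lemma test_dd: "test_fn f \<Longrightarrow> v \<in> Basis \<Longrightarrow> test_fn (dd v f)"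
  unfolding test_fn_def using smooth_dd bounded_support_dd by blast

lemma test_sp: "test_fn f \<Longrightarrow> test_fn (sp i f)"
  unfolding sp_def by (rule test_dd) auto

lemma test_smooth: "test_fn f \<Longrightarrow> smooth_fn f"
  unfolding test_fn_def by blast

lemma test_mult_left: "test_fn f \<Longrightarrow> smooth_fn g \<Longrightarrow> test_fn (\<lambda>x. f x * g x)"
  unfolding test_fn_def
proof (intro conjI)
  assume "smooth_fn f \<and> bounded {x. f x \<noteq> 0}" "smooth_fn g"
  then show "smooth_fn (\<lambda>x. f x * g x)" "bounded {x. f x * g x \<noteq> 0}"
    using smooth_mult[of f g] bounded_subset[of "{x. f x \<noteq> 0}" "{x. f x * g x \<noteq> 0}"] by auto
qed

lemma test_mult_right: "smooth_fn g \<Longrightarrow> test_fn f \<Longrightarrow> test_fn (\<lambda>x. g x * f x)"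
  using test_mult_left[of f g] by (simp add: mult.commute)

lemma test_add: "test_fn f \<Longrightarrow> test_fn g \<Longrightarrow> test_fn (\<lambda>x. f x + g x)"
  unfolding test_fn_def
proof (intro conjI)
  assume a: "smooth_fn f \<and> bounded {x. f x \<noteq> 0}" "smooth_fn g \<and> bounded {x. g x \<noteq> 0}"
  then show "smooth_fn (\<lambda>x. f x + g x)" by (auto intro: smooth_add)
  have "{x. f x + g x \<noteq> 0} \<subseteq> {x. f x \<noteq> 0} \<union> {x. g x \<noteq> 0}" by auto
  then show "bounded {x. f x + g x \<noteq> 0}" using a bounded_Un bounded_subset by blast
qed

lemma test_zero[simp]: "test_fn (\<lambda>x. 0)"
  unfolding test_fn_def by auto

lemma integrable_bounded_support:
  fixes h :: "'a::euclidean_space \<Rightarrow> real"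
  assumes "continuous_on UNIV h" "bounded {x. h x \<noteq> 0}"
  shows "h integrable_on UNIV"
proof -
  obtain a where a: "{x. h x \<noteq> 0} \<subseteq> cbox (-a) a" using bounded_subset_cbox_symmetric[OF assms(2)] by blast
  have "h integrable_on cbox (-a) a" using assms(1) by (auto intro: integrable_continuous continuous_on_subset)
  then show ?thesis by (rule integrable_on_superset) (use a in auto)
qed

lemma test_integrable: "test_fn h \<Longrightarrow> h integrable_on UNIV"
  unfolding test_fn_def using integrable_bounded_support smooth_cont by blast

lemma test_cont_integrable:
  assumes "test_fn f" "continuous_on UNIV g"
  shows "(\<lambda>x. f x * g x) integrable_on UNIV"
proof (rule integrable_bounded_support)
  show "continuous_on UNIV (\<lambda>x. f x * g x)" using assms smooth_cont[OF test_smooth[OF assms(1)]]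
    by (intro continuous_intros) auto
  show "bounded {x. f x * g x \<noteq> 0}" using assms(1) unfolding test_fn_def
    using bounded_subset[of "{x. f x \<noteq> 0}" "{x. f x * g x \<noteq> 0}"] by auto
qed


lemma test_support_cbox:
  assumes "test_fn h"
  obtains a where "\<And>x. x \<notin> cbox (-a) a \<Longrightarrow> h x = 0"
proof -
  have "bounded {x. h x \<noteq> 0}" using assms unfolding test_fn_def by blast
  then obtain a where "{x. h x \<noteq> 0} \<subseteq> cbox (-a) a" using bounded_subset_cbox_symmetric by metis
  then show ?thesis using that by blast
qed

lemma test_bounded:
  assumes "test_fn h"
  obtains M where "\<And>x. \<bar>h x\<bar> \<le> M"
proof -
  obtain a where a: "\<And>x. x \<notin> cbox (-a) a \<Longrightarrow> h x = 0" using test_support_cbox[OF assms] by blast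
  have "continuous_on (cbox (-a) a) h"
    using smooth_cont[OF test_smooth[OF assms]] continuous_on_subset by blast
  then have "compact (h ` cbox (-a) a)" by (rule compact_continuous_image) simp
  then have "bounded (h ` cbox (-a) a)" by (rule compact_imp_bounded)
  then obtain B where B: "\<And>y. y \<in> h ` cbox (-a) a \<Longrightarrow> norm y \<le> B" unfolding bounded_iff by blast
  have "\<bar>h x\<bar> \<le> max B 0" for x
  proof (cases "x \<in> cbox (-a) a")
    case True then show ?thesis using B[of "h x"] by auto
  next
    case False then show ?thesis using a by auto
  qed
  then show ?thesis using that by blast
qed

lemma translate_has_integral:
  fixes h :: "'a::euclidean_space \<Rightarrow> real"
  assumes "continuous_on UNIV h" "\<And>x. x \<notin> cbox a b \<Longrightarrow> h x = 0"
  shows "((\<lambda>x. h (x + c)) has_integral integral UNIV h) UNIV"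
proof -
  have hi: "(h has_integral integral (cbox a b) h) (cbox a b)"
    using assms(1) integrable_continuous[of a b h] continuous_on_subset by blast
  have "(h has_integral integral (cbox a b) h) UNIV"
    by (rule has_integral_on_superset[OF hi]) (use assms(2) in auto)
  hence eq: "integral UNIV h = integral (cbox a b) h" by (rule integral_unique)
  have "((\<lambda>x. h (x + c)) has_integral integral (cbox a b) h) (cbox (a - c) (b - c))"
    by (rule has_integral_shift_cbox[OF hi])
  then have "((\<lambda>x. h (x + c)) has_integral integral (cbox a b) h) UNIV"
  proof (rule has_integral_on_superset)
    fix x assume "x \<notin> cbox (a - c) (b - c)"
    then have "x + c \<notin> cbox a b" by (auto simp: mem_box algebra_simps inner_diff_left inner_add_left)
    then show "h (x + c) = 0" using assms(2) by blast
  qed simp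
  then show ?thesis using eq by simp
qed

lemma line_deriv:
  fixes w :: "'a::euclidean_space \<Rightarrow> real"
  assumes "w differentiable (at (x + \<tau> *\<^sub>R v))"
  shows "((\<lambda>s. w (x + s *\<^sub>R v)) has_real_derivative dd v w (x + \<tau> *\<^sub>R v)) (at \<tau>)"
proof -
  have l: "((\<lambda>s. x + s *\<^sub>R v) has_derivative (\<lambda>s. s *\<^sub>R v)) (at \<tau>)"
    by (auto intro!: derivative_eq_intros)
  have 1: "((\<lambda>s. w (x + s *\<^sub>R v)) has_derivative (\<lambda>s. dd (s *\<^sub>R v) w (x + \<tau> *\<^sub>R v))) (at \<tau>)"
    using has_derivative_compose[OF l has_derivative_dd[OF assms]] by simp
  have lin: "linear (\<lambda>u. dd u w (x + \<tau> *\<^sub>R v))" using has_derivative_linear[OF has_derivative_dd[OF assms]] .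
  have "(\<lambda>s. dd (s *\<^sub>R v) w (x + \<tau> *\<^sub>R v)) = (\<lambda>s. dd v w (x + \<tau> *\<^sub>R v) * s)"
    using linear_cmul[OF lin] by (auto simp: mult.commute)
  with 1 show ?thesis unfolding has_field_derivative_def by simp
qed

lemma filterlim_inv_Suc: "filterlim (\<lambda>k. inverse (real (Suc k))) (at (0::real)) sequentially"
  unfolding filterlim_at using LIMSEQ_inverse_real_of_nat by auto

lemma integral_dd_zero:
  fixes w :: "'a::euclidean_space \<Rightarrow> real"
  assumes w: "test_fn w" and v: "v \<in> Basis"
  shows "integral UNIV (dd v w) = 0"
proof -
  have sw: "smooth_fn w" using w by (rule test_smooth)
  have cw: "continuous_on UNIV w" using sw by (rule smooth_cont)
  have dw: "\<And>x. w differentiable (at x)" using sw by (rule smooth_diff)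
  have sup: "bounded {x. w x \<noteq> 0}" using w unfolding test_fn_def by blast
  then obtain r where r0: "\<forall>x\<in>{x. w x \<noteq> 0}. norm x \<le> r"
    unfolding bounded_pos by blast
  have r: "\<And>x. norm x > r \<Longrightarrow> w x = 0"
  proof (rule ccontr)
    fix x assume "norm x > r" "w x \<noteq> 0"
    then show False using r0 by auto
  qed
  obtain a where a: "\<And>x. x \<notin> cbox (-a) a \<Longrightarrow> w x = 0" using test_support_cbox[OF w] by blast
  obtain b where b: "cball (0::'a) (r + norm v) \<subseteq> cbox (-b) b"
    using bounded_subset_cbox_symmetric[OF bounded_cball[of "0::'a" "r + norm v"]] by blast
  obtain M where M: "\<And>x. \<bar>dd v w x\<bar> \<le> M" using test_bounded[OF test_dd[OF w v]] by blast
  define hs where "hs k = inverse (real (Suc k))" for k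
  have hs_pos: "0 < hs k" "hs k \<le> 1" for k unfolding hs_def by (simp_all add: inverse_le_1_iff)
  define f where "f k x = (w (x + hs k *\<^sub>R v) - w x) / hs k" for k and x :: 'a
  have int_tr: "((\<lambda>x. w (x + c)) has_integral integral UNIV w) UNIV" for c
    by (rule translate_has_integral[OF cw a])
  have wint: "(w has_integral integral UNIV w) UNIV"
    using test_integrable[OF w] by (simp add: integrable_integral)
  have fint: "(f k has_integral 0) UNIV" for k
  proof -
    have "((\<lambda>x. w (x + hs k *\<^sub>R v) - w x) has_integral (integral UNIV w - integral UNIV w)) UNIV"
      by (rule has_integral_diff[OF int_tr wint])
    from has_integral_divide[OF this, of "hs k"]
    have "((\<lambda>x. (w (x + hs k *\<^sub>R v) - w x) / hs k) has_integral (0 / hs k)) UNIV" by simp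
    then show ?thesis unfolding f_def by simp
  qed
  define H where "H x = (if x \<in> cbox (-b) b then M else 0)" for x
  have Hint: "H integrable_on UNIV"
    unfolding H_def integrable_restrict_UNIV by (rule integrable_const)
  have outside: "f k x = 0" if "x \<notin> cbox (-b) b" for k and x :: 'a
  proof -
    have nx: "norm x > r + norm v"
    proof (rule ccontr)
      assume "\<not> norm x > r + norm v"
      then have "x \<in> cball 0 (r + norm v)" by simp
      then show False using b that by blast
    qed
    have "norm (x + hs k *\<^sub>R v) \<ge> norm x - hs k * norm v"
      using norm_triangle_ineq2[of x "- (hs k *\<^sub>R v)"] by (simp add: hs_pos(1) less_imp_le)
    moreover have "hs k * norm v \<le> norm v" using hs_pos[of k] by (simp add: mult_left_le_one_le)
    ultimately have "norm (x + hs k *\<^sub>R v) > r" using nx by linarith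
    then have "w (x + hs k *\<^sub>R v) = 0" using r by blast
    moreover have "w x = 0" using r[of x] nx norm_ge_zero[of v] by linarith
    ultimately show ?thesis by (simp add: f_def)
  qed
  have bound: "norm (f k x) \<le> H x" for k and x :: 'a
  proof (cases "x \<in> cbox (-b) b")
    case False then show ?thesis by (simp add: outside H_def)
  next
    case True
    have "\<exists>z. 0 < z \<and> z < hs k \<and> w (x + hs k *\<^sub>R v) - w (x + 0 *\<^sub>R v) = (hs k - 0) * dd v w (x + z *\<^sub>R v)"
      by (rule MVT2[OF hs_pos(1)]) (rule line_deriv[OF dw])
    then obtain z where "w (x + hs k *\<^sub>R v) - w x = hs k * dd v w (x + z *\<^sub>R v)" by auto
    then have "f k x = dd v w (x + z *\<^sub>R v)" using hs_pos(1)[of k] by (simp add: f_def)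
    then show ?thesis using M True by (simp add: H_def)
  qed
  have conv: "(\<lambda>k. f k x) \<longlonglongrightarrow> dd v w x" for x :: 'a
  proof -
    have "((\<lambda>s. w (x + s *\<^sub>R v)) has_real_derivative dd v w (x + 0 *\<^sub>R v)) (at 0)"
      by (rule line_deriv[OF dw])
    then have "((\<lambda>s. (w (x + s *\<^sub>R v) - w (x + 0 *\<^sub>R v)) / (s - 0)) \<longlongrightarrow> dd v w x) (at 0)"
      unfolding has_field_derivative_iff by simp
    from filterlim_compose[OF this filterlim_inv_Suc]
    show ?thesis by (simp add: f_def hs_def)
  qed
  have "(\<lambda>k. integral UNIV (f k)) \<longlonglongrightarrow> integral UNIV (dd v w)"
    by (rule dominated_convergence(2)[OF _ Hint _ conv]) (use fint bound in auto)
  moreover have "(\<lambda>k. integral UNIV (f k)) = (\<lambda>k. 0)" using fint by (auto intro: integral_unique)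
  ultimately have "(\<lambda>k. 0::real) \<longlonglongrightarrow> integral UNIV (dd v w)" by simp
  then show ?thesis using LIMSEQ_unique[OF _ tendsto_const[of "0::real"]] by blast
qed

lemma ibp_test_right:
  assumes u: "smooth_fn u" and p: "test_fn p"
  shows "integral UNIV (\<lambda>x. u x * sp i p x) = - integral UNIV (\<lambda>x. sp i u x * p x)"
proof -
  have tw: "test_fn (\<lambda>x. u x * p x)" by (rule test_mult_right[OF u p])
  have du: "\<And>x. u differentiable (at x)" and dp: "\<And>x. p differentiable (at x)"
    using u p smooth_diff test_smooth by blast+
  have e: "sp i (\<lambda>x. u x * p x) = (\<lambda>x. sp i u x * p x + u x * sp i p x)"
    unfolding sp_def by (rule dd_mult_fun[OF du dp])
  have i1: "(\<lambda>x. sp i u x * p x) integrable_on UNIV"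
    using test_cont_integrable[OF p smooth_cont[OF smooth_sp[OF u]]] by (simp add: mult.commute)
  have i2: "(\<lambda>x. u x * sp i p x) integrable_on UNIV"
    using test_cont_integrable[OF test_sp[OF p] smooth_cont[OF u]] by (simp add: mult.commute)
  have "integral UNIV (sp i (\<lambda>x. u x * p x)) = 0"
    unfolding sp_def by (rule integral_dd_zero[OF tw]) simp
  then have "integral UNIV (\<lambda>x. sp i u x * p x) + integral UNIV (\<lambda>x. u x * sp i p x) = 0"
    unfolding e using integral_add[OF i1 i2] by simp
  then show ?thesis by linarith
qed

lemma ibp_test_left:
  assumes u: "test_fn u" and p: "smooth_fn p"
  shows "integral UNIV (\<lambda>x. u x * sp i p x) = - integral UNIV (\<lambda>x. sp i u x * p x)"
proof -
  have "integral UNIV (\<lambda>x. sp i p x * u x) = - integral UNIV (\<lambda>x. p x * sp i u x)"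
    using ibp_test_right[OF p u, of i] by linarith
  then show ?thesis by (simp add: mult.commute)
qed


lemma second_diff_mvt:
  fixes u :: "'a::euclidean_space \<Rightarrow> real"
  assumes du: "\<And>y. u differentiable (at y)" and dau: "\<And>y. dd a u differentiable (at y)" and h: "0 < h"
  shows "\<exists>\<xi> \<eta>. 0 < \<xi> \<and> \<xi> < h \<and> 0 < \<eta> \<and> \<eta> < h \<and>
     u (x + h *\<^sub>R a + h *\<^sub>R b) - u (x + h *\<^sub>R a) - u (x + h *\<^sub>R b) + u x
       = h * h * dd b (dd a u) (x + \<xi> *\<^sub>R a + \<eta> *\<^sub>R b)"
proof -
  define \<phi> where "\<phi> \<tau> = u ((x + h *\<^sub>R b) + \<tau> *\<^sub>R a) - u (x + \<tau> *\<^sub>R a)" for \<tau>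
  have "\<exists>\<xi>. 0 < \<xi> \<and> \<xi> < h \<and> \<phi> h - \<phi> 0 = (h - 0) * (\<lambda>\<tau>. dd a u ((x + h *\<^sub>R b) + \<tau> *\<^sub>R a) - dd a u (x + \<tau> *\<^sub>R a)) \<xi>"
    by (rule MVT2[OF h, of \<phi> "\<lambda>\<tau>. dd a u ((x + h *\<^sub>R b) + \<tau> *\<^sub>R a) - dd a u (x + \<tau> *\<^sub>R a)"])
       (unfold \<phi>_def, intro DERIV_diff line_deriv du)
  then obtain \<xi> where \<xi>: "0 < \<xi>" "\<xi> < h"
    and e1: "\<phi> h - \<phi> 0 = h * (dd a u ((x + h *\<^sub>R b) + \<xi> *\<^sub>R a) - dd a u (x + \<xi> *\<^sub>R a))" by auto
  have "\<exists>\<eta>. 0 < \<eta> \<and> \<eta> < h \<and> dd a u ((x + \<xi> *\<^sub>R a) + h *\<^sub>R b) - dd a u ((x + \<xi> *\<^sub>R a) + 0 *\<^sub>R b)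
     = (h - 0) * (\<lambda>\<sigma>. dd b (dd a u) ((x + \<xi> *\<^sub>R a) + \<sigma> *\<^sub>R b)) \<eta>"
    by (rule MVT2[OF h, of "\<lambda>\<sigma>. dd a u ((x + \<xi> *\<^sub>R a) + \<sigma> *\<^sub>R b)" "\<lambda>\<sigma>. dd b (dd a u) ((x + \<xi> *\<^sub>R a) + \<sigma> *\<^sub>R b)"])
       (rule line_deriv[OF dau])
  then obtain \<eta> where \<eta>: "0 < \<eta>" "\<eta> < h"
    and e2: "dd a u ((x + \<xi> *\<^sub>R a) + h *\<^sub>R b) - dd a u (x + \<xi> *\<^sub>R a) = h * dd b (dd a u) (x + \<xi> *\<^sub>R a + \<eta> *\<^sub>R b)"
    by auto
  have xe: "(x + h *\<^sub>R b) + \<xi> *\<^sub>R a = (x + \<xi> *\<^sub>R a) + h *\<^sub>R b" by (simp add: algebra_simps)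
  have "\<phi> h - \<phi> 0 = h * h * dd b (dd a u) (x + \<xi> *\<^sub>R a + \<eta> *\<^sub>R b)"
    using e1 e2[folded xe] by simp
  moreover have "\<phi> h - \<phi> 0 = u (x + h *\<^sub>R a + h *\<^sub>R b) - u (x + h *\<^sub>R a) - u (x + h *\<^sub>R b) + u x"
    unfolding \<phi>_def by (simp add: algebra_simps)
  ultimately show ?thesis using \<xi> \<eta> by metis
qed

lemma schwarz_gen:
  fixes u :: "'a::euclidean_space \<Rightarrow> real"
  assumes du: "\<And>y. u differentiable (at y)" and dau: "\<And>y. dd a u differentiable (at y)"
    and dbu: "\<And>y. dd b u differentiable (at y)"
    and c1: "\<And>y. isCont (dd b (dd a u)) y" and c2: "\<And>y. isCont (dd a (dd b u)) y"
  shows "dd b (dd a u) x = dd a (dd b u) x"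
proof (rule ccontr)
  define D1 where "D1 = dd b (dd a u)"
  define D2 where "D2 = dd a (dd b u)"
  assume "dd b (dd a u) x \<noteq> dd a (dd b u) x"
  then have ne: "D1 x \<noteq> D2 x" by (simp add: D1_def D2_def)
  define e where "e = \<bar>D1 x - D2 x\<bar> / 2"
  have e: "e > 0" using ne by (simp add: e_def)
  obtain d1 where d1: "d1 > 0" "\<And>y. dist y x < d1 \<Longrightarrow> dist (D1 y) (D1 x) < e"
    using c1[of x] e unfolding continuous_at_eps_delta D1_def by blast
  obtain d2 where d2: "d2 > 0" "\<And>y. dist y x < d2 \<Longrightarrow> dist (D2 y) (D2 x) < e"
    using c2[of x] e unfolding continuous_at_eps_delta D2_def by blast
  define K where "K = norm a + norm b + 1"
  have K: "K > 0" "K \<ge> 1" by (simp_all add: K_def add_nonneg_pos)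
  define h where "h = min d1 d2 / K / 2"
  have h: "h > 0" using d1 d2 K by (simp add: h_def)
  have "h * K = min d1 d2 / 2" using K by (simp add: h_def)
  then have hK: "h * K < min d1 d2" using d1 d2 by linarith
  obtain \<xi> \<eta> where p: "0 < \<xi>" "\<xi> < h" "0 < \<eta>" "\<eta> < h"
    and q: "u (x + h *\<^sub>R a + h *\<^sub>R b) - u (x + h *\<^sub>R a) - u (x + h *\<^sub>R b) + u x
       = h * h * D1 (x + \<xi> *\<^sub>R a + \<eta> *\<^sub>R b)"
    using second_diff_mvt[OF du dau h, of x b] unfolding D1_def by blast
  obtain \<xi>' \<eta>' where p': "0 < \<xi>'" "\<xi>' < h" "0 < \<eta>'" "\<eta>' < h"
    and q': "u (x + h *\<^sub>R b + h *\<^sub>R a) - u (x + h *\<^sub>R b) - u (x + h *\<^sub>R a) + u x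
       = h * h * D2 (x + \<xi>' *\<^sub>R b + \<eta>' *\<^sub>R a)"
    using second_diff_mvt[OF du dbu h, of x a] unfolding D2_def by blast
  have xe: "x + h *\<^sub>R b + h *\<^sub>R a = x + h *\<^sub>R a + h *\<^sub>R b" by (simp add: algebra_simps)
  have "h * h * D1 (x + \<xi> *\<^sub>R a + \<eta> *\<^sub>R b) = h * h * D2 (x + \<xi>' *\<^sub>R b + \<eta>' *\<^sub>R a)"
    using q q'[unfolded xe] by linarith
  then have eqD: "D1 (x + \<xi> *\<^sub>R a + \<eta> *\<^sub>R b) = D2 (x + \<xi>' *\<^sub>R b + \<eta>' *\<^sub>R a)" using h by simp
  have distb: "dist (x + s *\<^sub>R c + r *\<^sub>R c') x < min d1 d2"
    if "0 < s" "s < h" "0 < r" "r < h" "norm c + norm c' = norm a + norm b" for s r c c'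
  proof -
    have "dist (x + s *\<^sub>R c + r *\<^sub>R c') x = norm (s *\<^sub>R c + r *\<^sub>R c')" by (simp add: dist_norm)
    also have "\<dots> \<le> s * norm c + r * norm c'"
      using norm_triangle_ineq[of "s *\<^sub>R c" "r *\<^sub>R c'"] that by simp
    also have "\<dots> \<le> h * norm c + h * norm c'"
      using that by (intro add_mono mult_right_mono) auto
    also have "\<dots> = h * (norm a + norm b)" by (metis distrib_left that(5))
    also have "\<dots> \<le> h * K" using h unfolding K_def by (intro mult_left_mono) auto
    also have "\<dots> < min d1 d2" by (rule hK)
    finally show ?thesis .
  qed
  have "dist (D1 (x + \<xi> *\<^sub>R a + \<eta> *\<^sub>R b)) (D1 x) < e"
    using d1(2) distb[OF p, of a b] by simp
  moreover have "dist (D2 (x + \<xi>' *\<^sub>R b + \<eta>' *\<^sub>R a)) (D2 x) < e"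
    using d2(2) distb[OF p', of b a] by simp
  ultimately have "\<bar>D1 x - D2 x\<bar> < 2 * e" using eqD by (simp add: dist_real_def)
  then show False by (simp add: e_def)
qed

lemma schwarz_smooth:
  assumes "smooth_fn u" "a \<in> Basis" "b \<in> Basis"
  shows "dd b (dd a u) = dd a (dd b u)"
proof
  fix x
  have s: "smooth_fn (dd a u)" "smooth_fn (dd b u)" using assms smooth_dd by blast+
  show "dd b (dd a u) x = dd a (dd b u) x"
    by (rule schwarz_gen) (use assms s smooth_diff smooth_contx smooth_dd in blast)+
qed

lemma schwarz_sp: "smooth_fn u \<Longrightarrow> sp i (sp l u) = sp l (sp i u)"
  unfolding sp_def by (rule schwarz_smooth) auto


lemma dd_real_deriv: "(f has_real_derivative D) (at x) \<Longrightarrow> dd 1 f x = D"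
  unfolding has_field_derivative_def by (drule dd_eq[where v=1]) simp

lemma Sm_Suc_real: "Sm (Suc n) (f :: real \<Rightarrow> real) \<longleftrightarrow> (\<forall>x. f differentiable (at x)) \<and> Sm n (dd 1 f)"
  by (simp add: Sm_Suc)

definition Phi :: "real poly \<Rightarrow> real \<Rightarrow> real" where
  "Phi p s = (if s > 0 then poly p (inverse s) * exp (- inverse s) else 0)"

definition qstep :: "real poly \<Rightarrow> real poly" where
  "qstep p = pCons 0 (pCons 0 (p - pderiv p))"

lemma poly_exp_lim: fixes r :: "real poly" shows "((\<lambda>y. poly r y * exp (- y)) \<longlongrightarrow> 0) at_top"
proof -
  have e: "(\<lambda>y. poly r y * exp (- y)) = (\<lambda>y. \<Sum>i\<le>degree r. coeff r i * (y ^ i / exp y))"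
    by (auto simp: poly_altdef sum_divide_distrib exp_minus field_simps)
  have "((\<lambda>y. \<Sum>i\<le>degree r. coeff r i * (y ^ i / exp y)) \<longlongrightarrow> (\<Sum>i\<le>degree r. coeff r i * 0)) at_top"
    by (intro tendsto_sum tendsto_mult tendsto_const tendsto_power_div_exp_0)
  then show ?thesis unfolding e by simp
qed

lemma Phi_deriv_pos:
  assumes "s > 0"
  shows "(Phi p has_real_derivative Phi (qstep p) s) (at s)"
proof -
  have d: "((\<lambda>s. poly p (inverse s) * exp (- inverse s)) has_real_derivative
      poly (pderiv p) (inverse s) * (- inverse (s^2)) * exp (- inverse s)
      + exp (- inverse s) * inverse (s^2) * poly p (inverse s)) (at s)"
  proof -
    have i: "(inverse has_real_derivative - inverse (s^2)) (at s)"
      using DERIV_inverse[of s] assms by (simp add: power2_eq_square)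
    have "((\<lambda>s. poly p (inverse s)) has_real_derivative poly (pderiv p) (inverse s) * (- inverse (s^2))) (at s)"
      using DERIV_chain2[OF poly_DERIV i] by simp
    moreover have "((\<lambda>s. exp (- inverse s)) has_real_derivative exp (- inverse s) * inverse (s^2)) (at s)"
      using DERIV_chain2[OF DERIV_exp DERIV_minus[OF i]] by simp
    ultimately show ?thesis by (rule DERIV_mult)
  qed
  have "(Phi p has_real_derivative
      poly (pderiv p) (inverse s) * (- inverse (s^2)) * exp (- inverse s)
      + exp (- inverse s) * inverse (s^2) * poly p (inverse s)) (at s)"
    by (rule has_field_derivative_transform_within_open[OF d, of "{0<..}"]) (use assms in \<open>auto simp: Phi_def\<close>)
  moreover have "poly (pderiv p) (inverse s) * (- inverse (s^2)) * exp (- inverse s)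
      + exp (- inverse s) * inverse (s^2) * poly p (inverse s) = Phi (qstep p) s"
    using assms by (simp add: Phi_def qstep_def power2_eq_square algebra_simps)
  ultimately show ?thesis by simp
qed

lemma Phi_deriv_neg:
  assumes "s < 0"
  shows "(Phi p has_real_derivative Phi (qstep p) s) (at s)"
proof -
  have "((\<lambda>s. 0) has_real_derivative 0) (at s)" by simp
  then have "(Phi p has_real_derivative 0) (at s)"
    by (rule has_field_derivative_transform_within_open[of _ _ _ "{..<0}"]) (use assms in \<open>auto simp: Phi_def\<close>)
  then show ?thesis using assms by (simp add: Phi_def)
qed

lemma Phi_deriv_0: "(Phi p has_real_derivative Phi (qstep p) 0) (at 0)"
proof -
  have "((\<lambda>y. (Phi p y - Phi p 0) / (y - 0)) \<longlongrightarrow> 0) (at (0::real))"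
  proof (rule filterlim_split_at)
    have "eventually (\<lambda>y. 0 = (Phi p y - Phi p 0) / (y - 0)) (at_left (0::real))"
      by (simp add: eventually_at_filter Phi_def)
    then show "((\<lambda>y. (Phi p y - Phi p 0) / (y - 0)) \<longlongrightarrow> 0) (at_left 0)"
      by (rule Lim_transform_eventually[OF tendsto_const])
  next
    have "((\<lambda>y. poly (pCons 0 p) y * exp (- y)) \<longlongrightarrow> 0) at_top" by (rule poly_exp_lim)
    from filterlim_compose[OF this filterlim_inverse_at_top_right]
    have l: "((\<lambda>y. poly (pCons 0 p) (inverse y) * exp (- inverse y)) \<longlongrightarrow> 0) (at_right (0::real))" .
    have "eventually (\<lambda>y. poly (pCons 0 p) (inverse y) * exp (- inverse y) = (Phi p y - Phi p 0) / (y - 0)) (at_right (0::real))"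
      by (simp add: eventually_at_filter Phi_def field_simps)
    then show "((\<lambda>y. (Phi p y - Phi p 0) / (y - 0)) \<longlongrightarrow> 0) (at_right 0)"
      by (rule Lim_transform_eventually[OF l])
  qed
  then have "(Phi p has_real_derivative 0) (at 0)" unfolding has_field_derivative_iff .
  then show ?thesis by (simp add: Phi_def)
qed

lemma Phi_deriv: "(Phi p has_real_derivative Phi (qstep p) s) (at s)"
  using Phi_deriv_pos Phi_deriv_neg Phi_deriv_0 by (metis linorder_neqE_linordered_idom)

lemma Sm_Phi: "Sm n (Phi p)"
proof (induction n arbitrary: p)
  case 0 then show ?case using Phi_deriv by (auto simp: Sm_0 real_differentiable_def)
next
  case (Suc n)
  have "dd 1 (Phi p) = Phi (qstep p)" using Phi_deriv dd_real_deriv by blast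
  then show ?case using Phi_deriv Suc.IH by (auto simp: Sm_Suc_real real_differentiable_def)
qed

lemma smooth_Phi: "smooth_fn (Phi p)"
  by (simp add: smooth_Sm Sm_Phi)


lemma integral_cmult: "integral S (\<lambda>x. c * f x) = c * integral S (f :: 'a::euclidean_space \<Rightarrow> real)"
  using integral_cmul[of S c f] by simp

lemma integral_multc: "integral S (\<lambda>x. f x * c) = integral S (f :: 'a::euclidean_space \<Rightarrow> real) * c"
  using integral_cmul[of S c f] by (simp add: mult.commute)

lemma dd_real_scale: "\<phi> differentiable (at y) \<Longrightarrow> dd h \<phi> y = h * dd 1 (\<phi> :: real \<Rightarrow> real) y"
proof -
  assume d: "\<phi> differentiable (at y)"
  have "linear (\<lambda>h. dd h \<phi> y)" using has_derivative_linear[OF has_derivative_dd[OF d]] .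
  from linear_cmul[OF this, of h 1] show ?thesis by simp
qed

lemma comp_affine_has_derivative:
  fixes \<phi> :: "real \<Rightarrow> real" and w :: "'a::euclidean_space"
  assumes d: "\<phi> differentiable (at (x \<bullet> w + \<beta>))"
  shows "((\<lambda>x. \<phi> (x \<bullet> w + \<beta>)) has_derivative (\<lambda>h. (h \<bullet> w) * dd 1 \<phi> (x \<bullet> w + \<beta>))) (at x)"
proof -
  have L0: "((\<lambda>x. x \<bullet> w) has_derivative (\<lambda>h. h \<bullet> w)) (at x)"
    by (rule bounded_linear.has_derivative[OF bounded_linear_inner_left has_derivative_ident])
  have L: "((\<lambda>x. x \<bullet> w + \<beta>) has_derivative (\<lambda>h. h \<bullet> w)) (at x)"
    using has_derivative_add_const[OF L0] by simp
  have "((\<lambda>x. \<phi> (x \<bullet> w + \<beta>)) has_derivative (\<lambda>h. dd (h \<bullet> w) \<phi> (x \<bullet> w + \<beta>))) (at x)"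
    using has_derivative_compose[OF L has_derivative_dd[OF d]] by simp
  moreover have "(\<lambda>h. dd (h \<bullet> w) \<phi> (x \<bullet> w + \<beta>)) = (\<lambda>h. (h \<bullet> w) * dd 1 \<phi> (x \<bullet> w + \<beta>))"
    using dd_real_scale[OF d] by blast
  ultimately show ?thesis by simp
qed

lemma Sm_affine:
  fixes w :: "'a::euclidean_space"
  shows "Sm n (\<phi> :: real \<Rightarrow> real) \<Longrightarrow> Sm n (\<lambda>x::'a. \<phi> (x \<bullet> w + \<beta>))"
proof (induction n arbitrary: \<phi>)
  case 0 then show ?case
    by (auto simp: Sm_0 intro: differentiableI[OF comp_affine_has_derivative])
next
  case (Suc n)
  have d: "\<And>y. \<phi> differentiable (at y)" using Suc.prems Sm_diffble by blast
  have e: "dd v (\<lambda>x::'a. \<phi> (x \<bullet> w + \<beta>)) = (\<lambda>x. (v \<bullet> w) * dd 1 \<phi> (x \<bullet> w + \<beta>))" for v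
    by (intro ext) (rule dd_eq[OF comp_affine_has_derivative[OF d]])
  have "Sm n (dd 1 \<phi>)" using Suc.prems by (simp add: Sm_Suc)
  then have "Sm n (\<lambda>x::'a. dd 1 \<phi> (x \<bullet> w + \<beta>))" by (rule Suc.IH)
  then have "Sm n (\<lambda>x::'a. (v \<bullet> w) * dd 1 \<phi> (x \<bullet> w + \<beta>))" for v by (intro Sm_mult Sm_const)
  then show ?case unfolding Sm_Suc e
    using differentiableI[OF comp_affine_has_derivative[OF d]] by blast
qed

lemma smooth_affine: "smooth_fn (\<phi> :: real \<Rightarrow> real) \<Longrightarrow> smooth_fn (\<lambda>x::'a::euclidean_space. \<phi> (x \<bullet> w + \<beta>))"
  by (simp add: smooth_Sm Sm_affine)

lemma smooth_prod: "finite I \<Longrightarrow> (\<And>i. i \<in> I \<Longrightarrow> smooth_fn (f i)) \<Longrightarrow> smooth_fn (\<lambda>x. \<Prod>i\<in>I. f i x)"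
proof (induction I rule: finite_induct)
  case empty then show ?case by simp
next
  case (insert i I)
  have "smooth_fn (\<lambda>x. f i x * (\<Prod>i\<in>I. f i x))"
    by (rule smooth_mult) (use insert in auto)
  then show ?case using insert by simp
qed

definition psi :: "real \<Rightarrow> real" where
  "psi s = Phi 1 (s \<bullet> 1 + 1) * Phi 1 (s \<bullet> (-1) + 1)"

lemma smooth_psi: "smooth_fn psi"
proof -
  have a: "smooth_fn (\<lambda>s::real. Phi 1 (s \<bullet> 1 + 1))" by (rule smooth_affine[OF smooth_Phi])
  have b: "smooth_fn (\<lambda>s::real. Phi 1 (s \<bullet> (-1) + 1))" by (rule smooth_affine[OF smooth_Phi])
  show ?thesis unfolding psi_def by (rule smooth_mult[OF a b])
qed

lemma psi_val: "psi s = (if -1 < s \<and> s < 1 then exp (- inverse (s + 1)) * exp (- inverse (1 - s)) else 0)"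
proof -
  have "psi s = Phi 1 (s + 1) * Phi 1 (1 - s)" by (simp add: psi_def)
  then show ?thesis by (simp add: Phi_def)
qed

lemma psi_nonneg: "psi s \<ge> 0" by (simp add: psi_val)
lemma psi_pos: "-1 < s \<Longrightarrow> s < 1 \<Longrightarrow> psi s > 0" by (simp add: psi_val)
lemma psi_nz: "psi s \<noteq> 0 \<Longrightarrow> \<bar>s\<bar> < 1" by (auto simp: psi_val split: if_splits)

lemma fund_lemma:
  fixes D :: "real^3 \<Rightarrow> real"
  assumes cD: "continuous_on UNIV D" and z: "\<And>b. test_fn b \<Longrightarrow> integral UNIV (\<lambda>x. D x * b x) = 0"
  shows "D x0 = 0"
proof (rule ccontr)
  assume ne: "D x0 \<noteq> 0"
  define E where "E x = D x * D x0" for x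
  have E0: "E x0 > 0" unfolding E_def using ne by (auto simp: zero_less_mult_iff linorder_neq_iff)
  have cE: "continuous_on UNIV E" unfolding E_def by (intro continuous_intros cD)
  then have "isCont E x0" by (simp add: continuous_on_eq_continuous_at)
  then obtain \<delta> where \<delta>: "\<delta> > 0" "\<And>y. dist y x0 < \<delta> \<Longrightarrow> dist (E y) (E x0) < E x0"
    using E0 unfolding continuous_at_eps_delta by blast
  have Epos: "E y > 0" if "dist y x0 < \<delta>" for y
    using \<delta>(2)[OF that] by (simp add: dist_real_def abs_less_iff)
  define \<rho> where "\<rho> = \<delta> / 3"
  have \<rho>: "\<rho> > 0" using \<delta> by (simp add: \<rho>_def)
  define B where "B x = (\<Prod>j\<in>UNIV. psi (x \<bullet> axis j (inverse \<rho>) + (- (x0$j * inverse \<rho>))))" for x :: "real^3"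
  have Bval: "B x = (\<Prod>j\<in>UNIV. psi ((x$j - x0$j) / \<rho>))" for x
    unfolding B_def by (simp add: inner_axis field_simps diff_divide_distrib)
  have sB: "smooth_fn B" unfolding B_def
    by (rule smooth_prod) (simp, rule smooth_affine[OF smooth_psi])
  have Bnn: "B x \<ge> 0" for x unfolding Bval by (intro prod_nonneg psi_nonneg)
  have B0: "B x0 > 0" unfolding Bval by (intro prod_pos psi_pos) auto
  have Bsupp: "\<bar>x$j - x0$j\<bar> < \<rho>" if "B x \<noteq> 0" for x j
  proof -
    have "psi ((x$j - x0$j) / \<rho>) \<noteq> 0"
    proof
      assume "psi ((x$j - x0$j) / \<rho>) = 0"
      then have "(\<Prod>j\<in>UNIV. psi ((x$j - x0$j) / \<rho>)) = 0"
        by (intro prod_zero) auto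
      then show False using that Bval[of x] by simp
    qed
    then have "\<bar>(x$j - x0$j) / \<rho>\<bar> < 1" by (rule psi_nz)
    then have "\<bar>x$j - x0$j\<bar> / \<rho> < 1" using \<rho> by (simp add: abs_divide)
    then show ?thesis using \<rho> by (simp add: pos_divide_less_eq)
  qed
  have Bdist: "dist x x0 < \<delta>" if "B x \<noteq> 0" for x
  proof -
    have "dist x x0 = norm (x - x0)" by (simp add: dist_norm)
    also have "\<dots> \<le> (\<Sum>j\<in>UNIV. \<bar>(x - x0)$j\<bar>)" by (rule norm_le_l1_cart)
    also have "\<dots> < (\<Sum>j\<in>(UNIV::3 set). \<rho>)"
    proof (rule sum_strict_mono)
      fix j :: 3 show "\<bar>(x - x0)$j\<bar> < \<rho>" using Bsupp[OF that, of j] by simp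
    qed auto
    also have "\<dots> = \<delta>" by (simp add: \<rho>_def)
    finally show ?thesis .
  qed
  have tB: "test_fn B" unfolding test_fn_def
  proof
    show "smooth_fn B" by (rule sB)
    have "{x. B x \<noteq> 0} \<subseteq> ball x0 \<delta>" using Bdist by (auto simp: dist_commute)
    then show "bounded {x. B x \<noteq> 0}" using bounded_ball bounded_subset by blast
  qed
  define f where "f x = E x * B x" for x
  have if0: "integral UNIV f = 0"
  proof -
    have "integral UNIV f = integral UNIV (\<lambda>x. D x0 * (D x * B x))" unfolding f_def E_def
      by (simp add: algebra_simps)
    also have "\<dots> = D x0 * integral UNIV (\<lambda>x. D x * B x)" by (rule integral_cmult)
    also have "\<dots> = 0" using z[OF tB] by simp
    finally show ?thesis .
  qed
  define a where "a = x0 - vec \<rho>"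
  define b where "b = x0 + vec \<rho>"
  have cf: "continuous_on UNIV f" unfolding f_def
    using cE smooth_cont[OF sB] by (intro continuous_intros) auto
  have fout: "f x = 0" if "x \<notin> cbox a b" for x
  proof (rule ccontr)
    assume "f x \<noteq> 0"
    then have "B x \<noteq> 0" by (auto simp: f_def)
    have "\<forall>j. a$j \<le> x$j \<and> x$j \<le> b$j"
    proof
      fix j show "a$j \<le> x$j \<and> x$j \<le> b$j" using Bsupp[OF \<open>B x \<noteq> 0\<close>, of j] by (simp add: a_def b_def abs_less_iff)
    qed
    then show False using that by (simp add: mem_box_cart)
  qed
  have fi: "(f has_integral integral (cbox a b) f) (cbox a b)"
    using cf integrable_continuous[of a b f] continuous_on_subset by blast
  have "(f has_integral integral (cbox a b) f) UNIV"
    by (rule has_integral_on_superset[OF fi]) (use fout in auto)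
  then have "integral (cbox a b) f = 0" using if0 integral_unique by metis
  then have fi0: "(f has_integral 0) (cbox a b)" using fi by simp
  have x0box: "x0 \<in> box a b" using \<rho> by (simp add: mem_box_cart a_def b_def)
  have "f x0 = 0"
  proof (rule has_integral_0_cbox_imp_0[OF _ _ fi0])
    show "continuous_on (cbox a b) f" using cf continuous_on_subset by blast
    show "\<And>x. x \<in> box a b \<Longrightarrow> 0 \<le> f x"
    proof -
      fix x
      show "0 \<le> f x"
      proof (cases "B x = 0")
        case True then show ?thesis by (simp add: f_def)
      next
        case False then show ?thesis using Epos[OF Bdist[OF False]] Bnn[of x] by (simp add: f_def)
      qed
    qed
    show "box a b \<noteq> {}" using x0box by blast
    show "x0 \<in> cbox a b" using x0box box_subset_cbox by blast
  qed
  then show False using E0 B0 by (simp add: f_def)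
qed


lemma test_int_comm: "test_fn b \<Longrightarrow> continuous_on UNIV G \<Longrightarrow> (\<lambda>x. G x * b x) integrable_on UNIV"
  using test_cont_integrable[of b G] by (simp add: mult.commute)

lemma fundamental_pair:
  fixes G1 G2 :: "real^3 \<Rightarrow> real"
  assumes c1: "continuous_on UNIV G1" and c2: "continuous_on UNIV G2"
    and e: "\<And>b. test_fn b \<Longrightarrow> integral UNIV (\<lambda>x. G1 x * b x) = integral UNIV (\<lambda>x. G2 x * b x)"
  shows "G1 = G2"
proof
  fix x0
  have cD: "continuous_on UNIV (\<lambda>x. G1 x - G2 x)" using c1 c2 by (intro continuous_intros)
  have "integral UNIV (\<lambda>x. (G1 x - G2 x) * b x) = 0" if b: "test_fn b" for b
  proof -
    have "integral UNIV (\<lambda>x. (G1 x - G2 x) * b x) = integral UNIV (\<lambda>x. G1 x * b x - G2 x * b x)"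
      by (simp add: algebra_simps)
    also have "\<dots> = integral UNIV (\<lambda>x. G1 x * b x) - integral UNIV (\<lambda>x. G2 x * b x)"
      by (rule integral_diff[OF test_int_comm[OF b c1] test_int_comm[OF b c2]])
    also have "\<dots> = 0" using e[OF b] by simp
    finally show ?thesis .
  qed
  then have "(\<lambda>x. G1 x - G2 x) x0 = 0" by (intro fund_lemma[OF cD]) auto
  then show "G1 x0 = G2 x0" by simp
qed

definition dA0 :: "(real^3 \<Rightarrow> real) \<Rightarrow> fstate" where
  "dA0 b = \<lparr>fA0 = b, fA = (\<lambda>i z. 0), fP0 = (\<lambda>z. 0), fP = (\<lambda>i z. 0)\<rparr>"
definition dA :: "3 \<Rightarrow> (real^3 \<Rightarrow> real) \<Rightarrow> fstate" where
  "dA i b = \<lparr>fA0 = (\<lambda>z. 0), fA = (\<lambda>j z. if j = i then b z else 0), fP0 = (\<lambda>z. 0), fP = (\<lambda>i z. 0)\<rparr>"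
definition dP0 :: "(real^3 \<Rightarrow> real) \<Rightarrow> fstate" where
  "dP0 b = \<lparr>fA0 = (\<lambda>z. 0), fA = (\<lambda>i z. 0), fP0 = b, fP = (\<lambda>i z. 0)\<rparr>"
definition dP :: "3 \<Rightarrow> (real^3 \<Rightarrow> real) \<Rightarrow> fstate" where
  "dP i b = \<lparr>fA0 = (\<lambda>z. 0), fA = (\<lambda>i z. 0), fP0 = (\<lambda>z. 0), fP = (\<lambda>j z. if j = i then b z else 0)\<rparr>"

lemma test_if: "test_fn b \<Longrightarrow> test_fn (\<lambda>z. if j = i then b z else 0)"
  by (cases "j = i") auto

lemma test_state_d: "test_fn b \<Longrightarrow> test_state (dA0 b)" "test_fn b \<Longrightarrow> test_state (dA i b)"
  "test_fn b \<Longrightarrow> test_state (dP0 b)" "test_fn b \<Longrightarrow> test_state (dP i b)"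
  by (auto simp: test_state_def dA0_def dA_def dP0_def dP_def test_if)

lemma sum_delta_mult: "(\<Sum>j\<in>(UNIV::3 set). f j * (if j = i then c else 0)) = f i * (c::real)"
proof -
  have "(\<Sum>j\<in>(UNIV::3 set). f j * (if j = i then c else 0)) = (\<Sum>j\<in>(UNIV::3 set). if j = i then f j * c else 0)"
    by (rule sum.cong) auto
  also have "\<dots> = f i * c" by (simp add: sum.delta')
  finally show ?thesis .
qed

lemma pair_d: "pair_state D (dA0 b) = integral UNIV (\<lambda>z. fA0 D z * b z)"
  "pair_state D (dA i b) = integral UNIV (\<lambda>z. fA D i z * b z)"
  "pair_state D (dP0 b) = integral UNIV (\<lambda>z. fP0 D z * b z)"
  "pair_state D (dP i b) = integral UNIV (\<lambda>z. fP D i z * b z)"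
  by (simp_all add: pair_state_def dA0_def dA_def dP0_def dP_def sum_delta_mult)

lemma fgrad_unique:
  assumes g1: "is_fgrad F s D1" and g2: "is_fgrad F s D2"
  shows "D1 = D2"
proof -
  have pe: "pair_state D1 d = pair_state D2 d" if "test_state d" for d
    using g1 g2 that unfolding is_fgrad_def using DERIV_unique by blast
  have c1: "cont_state D1" and c2: "cont_state D2" using g1 g2 by (auto simp: is_fgrad_def)
  have "fA0 D1 = fA0 D2"
    by (rule fundamental_pair) (use c1 c2 pe[OF test_state_d(1)] in \<open>auto simp: cont_state_def pair_d\<close>)
  moreover have "fA D1 i = fA D2 i" for i
    by (rule fundamental_pair) (use c1 c2 pe[OF test_state_d(2)] in \<open>auto simp: cont_state_def pair_d\<close>)
  moreover have "fP0 D1 = fP0 D2"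
    by (rule fundamental_pair) (use c1 c2 pe[OF test_state_d(3)] in \<open>auto simp: cont_state_def pair_d\<close>)
  moreover have "fP D1 i = fP D2 i" for i
    by (rule fundamental_pair) (use c1 c2 pe[OF test_state_d(4)] in \<open>auto simp: cont_state_def pair_d\<close>)
  ultimately show ?thesis by (cases D1, cases D2) auto
qed

lemma fgrad_eq: "is_fgrad F s D \<Longrightarrow> fgrad F s = D"
  unfolding fgrad_def using fgrad_unique by blast


lemma sp_lin: "(\<And>x. a differentiable (at x)) \<Longrightarrow> (\<And>x. b differentiable (at x)) \<Longrightarrow>
  sp i (\<lambda>x. a x + e * b x) = (\<lambda>x. sp i a x + e * sp i b x)"
proof -
  assume da: "\<And>x. a differentiable (at x)" and db: "\<And>x. b differentiable (at x)"
  have dbe: "\<And>x. (\<lambda>x. e * b x) differentiable (at x)" using db by auto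
  show ?thesis unfolding sp_def dd_add_fun[OF da dbe] dd_cmult_fun[OF db] ..
qed

lemma test_state_smooth: "test_state d \<Longrightarrow> smooth_state d"
  by (auto simp: test_state_def smooth_state_def test_smooth)

lemma shift_simps[simp]:
  "fA0 (shift_state s e d) = (\<lambda>x. fA0 s x + e * fA0 d x)"
  "fA (shift_state s e d) = (\<lambda>i x. fA s i x + e * fA d i x)"
  "fP0 (shift_state s e d) = (\<lambda>x. fP0 s x + e * fP0 d x)"
  "fP (shift_state s e d) = (\<lambda>i x. fP s i x + e * fP d i x)"
  by (simp_all add: shift_state_def)

lemma smear_deriv:
  assumes rho_shift: "\<And>e x. rho (shift_state s e d) x = rho s x + e * L x"
    and f: "test_fn f" and c1: "continuous_on UNIV (rho s)" and c2: "continuous_on UNIV L"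
  shows "((\<lambda>e. smear f rho (shift_state s e d)) has_real_derivative integral UNIV (\<lambda>x. f x * L x)) (at 0)"
proof -
  have i1: "(\<lambda>x. f x * rho s x) integrable_on UNIV" by (rule test_cont_integrable[OF f c1])
  have i2: "(\<lambda>x. f x * L x) integrable_on UNIV" by (rule test_cont_integrable[OF f c2])
  have i2': "(\<lambda>x. e * (f x * L x)) integrable_on UNIV" for e using integrable_on_mult_right[OF i2] by simp
  have "smear f rho (shift_state s e d) = integral UNIV (\<lambda>x. f x * rho s x) + e * integral UNIV (\<lambda>x. f x * L x)" for e
  proof -
    have "smear f rho (shift_state s e d) = integral UNIV (\<lambda>x. f x * rho s x + e * (f x * L x))"
      unfolding smear_def rho_shift by (simp add: algebra_simps)
    also have "\<dots> = integral UNIV (\<lambda>x. f x * rho s x) + integral UNIV (\<lambda>x. e * (f x * L x))"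
      by (rule integral_add[OF i1 i2'])
    finally show ?thesis by (simp add: integral_cmult)
  qed
  then have e: "(\<lambda>e. smear f rho (shift_state s e d)) = (\<lambda>e. integral UNIV (\<lambda>x. f x * rho s x) + e * integral UNIV (\<lambda>x. f x * L x))"
    by auto
  show ?thesis unfolding e by (auto intro!: derivative_eq_intros)
qed

context
  fixes \<theta> :: "real^3^3"
    and J0 :: "real \<times> (real^3) \<Rightarrow> real" and J :: "3 \<Rightarrow> real \<times> (real^3) \<Rightarrow> real"
    and t :: real
  assumes J0_smooth: "smooth_fn J0" and J_smooth: "\<And>k. smooth_fn (J k)"
begin

lemma sJ0t: "smooth_fn (\<lambda>z. J0 (t, z))" by (rule smooth_slice[OF J0_smooth])
lemma sJt: "smooth_fn (\<lambda>z. J k (t, z))" by (rule smooth_slice[OF J_smooth])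
lemma sCt: "smooth_fn (\<lambda>z. divJ J0 J (t, z))" by (rule smooth_divJ[OF J0_smooth J_smooth])

lemma smooth_phi2: "smooth_state s \<Longrightarrow> smooth_fn (phi2 \<theta> J0 t s)"
proof -
  assume ss: "smooth_state s"
  have a: "smooth_fn (\<lambda>x. \<Sum>i\<in>UNIV. sp i (fP s i) x)"
    using ss by (intro smooth_sum smooth_sp) (auto simp: smooth_state_def)
  have b: "smooth_fn (\<lambda>x. (1/2) * (\<Sum>k\<in>UNIV. \<Sum>l\<in>UNIV. \<theta> $ k $ l * sp l (\<lambda>y. fA s k y * J0 (t, y)) x))"
    using ss sJ0t by (intro smooth_cmult smooth_sum smooth_mult smooth_const smooth_sp) (auto simp: smooth_state_def)
  have "smooth_fn (\<lambda>x. (\<Sum>i\<in>UNIV. sp i (fP s i) x) - J0 (t, x)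
     + (1/2) * (\<Sum>k\<in>UNIV. \<Sum>l\<in>UNIV. \<theta> $ k $ l * sp l (\<lambda>y. fA s k y * J0 (t, y)) x))"
    by (rule smooth_add[OF smooth_diff_fn[OF a sJ0t] b])
  then show ?thesis unfolding phi2_def[abs_def] by simp
qed

lemma smooth_Phi3: "smooth_state s \<Longrightarrow> smooth_fn (Phi3 \<theta> J0 J t s)"
proof -
  assume ss: "smooth_state s"
  have a: "smooth_fn (\<lambda>y. \<Sum>l\<in>UNIV. \<Sum>i\<in>UNIV. \<theta> $ l $ i * sp i (\<lambda>z. J0 (t, z)) y * sp l (fA0 s) y)"
    using ss sJ0t by (intro smooth_sum smooth_mult smooth_const smooth_sp) (auto simp: smooth_state_def)
  have b: "smooth_fn (\<lambda>y. \<Sum>l\<in>UNIV. \<Sum>i\<in>UNIV. \<Sum>k\<in>UNIV.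
          \<theta> $ l $ i * sp i (\<lambda>z. J k (t, z) * sp l (fA s k) z) y)"
    using ss sJt by (intro smooth_sum smooth_mult smooth_const smooth_sp) (auto simp: smooth_state_def)
  have c: "smooth_fn (\<lambda>y. (1/2) * (\<Sum>i\<in>UNIV. \<Sum>l\<in>UNIV. \<theta> $ i $ l * sp i (\<lambda>z. fA s l z * divJ J0 J (t, z)) y))"
    using ss sCt by (intro smooth_cmult smooth_sum smooth_mult smooth_const smooth_sp) (auto simp: smooth_state_def)
  have "smooth_fn (\<lambda>y. - divJ J0 J (t, y) + (\<Sum>l\<in>UNIV. \<Sum>i\<in>UNIV. \<theta> $ l $ i * sp i (\<lambda>z. J0 (t, z)) y * sp l (fA0 s) y)
     + (\<Sum>l\<in>UNIV. \<Sum>i\<in>UNIV. \<Sum>k\<in>UNIV.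
          \<theta> $ l $ i * sp i (\<lambda>z. J k (t, z) * sp l (fA s k) z) y)
     - (1/2) * (\<Sum>i\<in>UNIV. \<Sum>l\<in>UNIV. \<theta> $ i $ l * sp i (\<lambda>z. fA s l z * divJ J0 J (t, z)) y))"
    by (rule smooth_diff_fn[OF smooth_add[OF smooth_add[OF smooth_uminus[OF sCt] a] b] c])
  then show ?thesis unfolding Phi3_def[abs_def] by simp
qed

lemma phi2_shift:
  assumes ss: "smooth_state s" and sd: "smooth_state d"
  shows "phi2 \<theta> J0 t (shift_state s e d) x = phi2 \<theta> J0 t s x + e * (phi2 \<theta> J0 t d x + J0 (t, x))"
proof -
  have 1: "sp i (fP (shift_state s e d) i) = (\<lambda>x. sp i (fP s i) x + e * sp i (fP d i) x)" for i
    using ss sd by (simp, intro sp_lin smooth_diff) (auto simp: smooth_state_def)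
  have 2: "sp l (\<lambda>y. fA (shift_state s e d) k y * J0 (t, y))
      = (\<lambda>x. sp l (\<lambda>y. fA s k y * J0 (t, y)) x + e * sp l (\<lambda>y. fA d k y * J0 (t, y)) x)" for k l
  proof -
    have "(\<lambda>y. fA (shift_state s e d) k y * J0 (t, y)) = (\<lambda>y. fA s k y * J0 (t, y) + e * (fA d k y * J0 (t, y)))"
      by (simp add: algebra_simps)
    moreover have "sp l \<dots> = (\<lambda>x. sp l (\<lambda>y. fA s k y * J0 (t, y)) x + e * sp l (\<lambda>y. fA d k y * J0 (t, y)) x)"
      using ss sd sJ0t by (intro sp_lin smooth_diff smooth_mult) (auto simp: smooth_state_def)
    ultimately show ?thesis by (simp only:)
  qed
  show ?thesis unfolding phi2_def 1 2
    by (simp add: sum.distrib sum_distrib_left algebra_simps)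
qed

lemma Phi3_shift:
  assumes ss: "smooth_state s" and sd: "smooth_state d"
  shows "Phi3 \<theta> J0 J t (shift_state s e d) y = Phi3 \<theta> J0 J t s y + e * (Phi3 \<theta> J0 J t d y + divJ J0 J (t, y))"
proof -
  have 1: "sp l (fA0 (shift_state s e d)) = (\<lambda>x. sp l (fA0 s) x + e * sp l (fA0 d) x)" for l
    using ss sd by (simp, intro sp_lin smooth_diff) (auto simp: smooth_state_def)
  have 2: "sp i (\<lambda>z. J k (t, z) * sp l (fA (shift_state s e d) k) z)
      = (\<lambda>x. sp i (\<lambda>z. J k (t, z) * sp l (fA s k) z) x + e * sp i (\<lambda>z. J k (t, z) * sp l (fA d k) z) x)" for i k l
  proof -
    have "sp l (fA (shift_state s e d) k) = (\<lambda>x. sp l (fA s k) x + e * sp l (fA d k) x)"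
      using ss sd by (simp, intro sp_lin smooth_diff) (auto simp: smooth_state_def)
    then have "(\<lambda>z. J k (t, z) * sp l (fA (shift_state s e d) k) z)
       = (\<lambda>z. J k (t, z) * sp l (fA s k) z + e * (J k (t, z) * sp l (fA d k) z))"
      by (simp add: algebra_simps)
    moreover have "sp i \<dots> = (\<lambda>x. sp i (\<lambda>z. J k (t, z) * sp l (fA s k) z) x + e * sp i (\<lambda>z. J k (t, z) * sp l (fA d k) z) x)"
      using ss sd sJt by (intro sp_lin smooth_diff smooth_mult smooth_sp) (auto simp: smooth_state_def)
    ultimately show ?thesis by (simp only:)
  qed
  have 3: "sp i (\<lambda>z. fA (shift_state s e d) l z * divJ J0 J (t, z))
      = (\<lambda>x. sp i (\<lambda>z. fA s l z * divJ J0 J (t, z)) x + e * sp i (\<lambda>z. fA d l z * divJ J0 J (t, z)) x)" for i l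
  proof -
    have "(\<lambda>z. fA (shift_state s e d) l z * divJ J0 J (t, z))
       = (\<lambda>z. fA s l z * divJ J0 J (t, z) + e * (fA d l z * divJ J0 J (t, z)))"
      by (simp add: algebra_simps)
    moreover have "sp i \<dots> = (\<lambda>x. sp i (\<lambda>z. fA s l z * divJ J0 J (t, z)) x + e * sp i (\<lambda>z. fA d l z * divJ J0 J (t, z)) x)"
      using ss sd sCt by (intro sp_lin smooth_diff smooth_mult) (auto simp: smooth_state_def)
    ultimately show ?thesis by (simp only:)
  qed
  show ?thesis unfolding Phi3_def 1 2 3
    by (simp add: sum.distrib sum_distrib_left algebra_simps)
qed

end


lemma test_cmult: "test_fn h \<Longrightarrow> test_fn (\<lambda>x. c * h x)"
  by (rule test_mult_right) auto

lemma test_sum: "finite I \<Longrightarrow> (\<And>a. a \<in> I \<Longrightarrow> test_fn (h a)) \<Longrightarrow> test_fn (\<lambda>x. \<Sum>a\<in>I. h a x)"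
  by (induction I rule: finite_induct) (auto intro: test_add)

lemma int_add: "test_fn h1 \<Longrightarrow> test_fn h2 \<Longrightarrow>
   integral UNIV (\<lambda>x. h1 x + h2 x) = integral UNIV h1 + integral UNIV h2"
  by (rule integral_add) (auto intro: test_integrable)

lemma int_diff: "test_fn h1 \<Longrightarrow> test_fn h2 \<Longrightarrow>
   integral UNIV (\<lambda>x. h1 x - h2 x) = integral UNIV h1 - integral UNIV h2"
  by (rule integral_diff) (auto intro: test_integrable)

lemma int_sum: "finite I \<Longrightarrow> (\<And>a. a \<in> I \<Longrightarrow> test_fn (h a)) \<Longrightarrow>
   integral UNIV (\<lambda>x. \<Sum>a\<in>I. h a x) = (\<Sum>a\<in>I. integral UNIV (h a))"
  by (rule integral_sum) (auto intro: test_integrable)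

lemma int_sum_UNIV: "(\<And>a. test_fn (h a)) \<Longrightarrow>
   integral UNIV (\<lambda>x. \<Sum>a\<in>(UNIV::3 set). h a x) = (\<Sum>a\<in>UNIV. integral UNIV (h a))"
  by (rule int_sum) auto

lemma test_sum_UNIV: "(\<And>a. test_fn (h a)) \<Longrightarrow> test_fn (\<lambda>x. \<Sum>a\<in>(UNIV::3 set). h a x)"
  by (rule test_sum) auto

lemma int_sum1_c: "(\<And>a. test_fn (h a)) \<Longrightarrow>
   integral UNIV (\<lambda>x. \<Sum>a\<in>(UNIV::3 set). c a * h a x) = (\<Sum>a\<in>UNIV. c a * integral UNIV (h a))"
  by (subst int_sum_UNIV) (auto intro: test_cmult simp: integral_cmult)

lemma int_sum2_c: "(\<And>a b. test_fn (h a b)) \<Longrightarrow>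
   integral UNIV (\<lambda>x. \<Sum>a\<in>(UNIV::3 set). \<Sum>b\<in>(UNIV::3 set). c a b * h a b x)
     = (\<Sum>a\<in>UNIV. \<Sum>b\<in>UNIV. c a b * integral UNIV (h a b))"
  by (subst int_sum_UNIV) (auto intro!: test_sum_UNIV test_cmult simp: int_sum1_c)

lemma int_sum3_c: "(\<And>a b e. test_fn (h a b e)) \<Longrightarrow>
   integral UNIV (\<lambda>x. \<Sum>a\<in>(UNIV::3 set). \<Sum>b\<in>(UNIV::3 set). \<Sum>e\<in>(UNIV::3 set). c a b e * h a b e x)
     = (\<Sum>a\<in>UNIV. \<Sum>b\<in>UNIV. \<Sum>e\<in>UNIV. c a b e * integral UNIV (h a b e))"
  by (subst int_sum_UNIV) (auto intro!: test_sum_UNIV test_cmult simp: int_sum2_c)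

lemma int_add_c: "test_fn h1 \<Longrightarrow> test_fn h2 \<Longrightarrow>
   integral UNIV (\<lambda>x. h1 x + c * h2 x) = integral UNIV h1 + c * integral UNIV h2"
  by (subst int_add) (auto intro: test_cmult simp: integral_cmult)

context
  fixes \<theta> :: "real^3^3"
    and J0 :: "real \<times> (real^3) \<Rightarrow> real" and J :: "3 \<Rightarrow> real \<times> (real^3) \<Rightarrow> real"
    and t :: real and f :: "real^3 \<Rightarrow> real"
  assumes J0_smooth: "smooth_fn J0" and J_smooth: "\<And>k. smooth_fn (J k)"
    and f_test: "test_fn f"
begin

definition DF :: fstate where
  "DF = \<lparr>fA0 = (\<lambda>z. 0), fA = (\<lambda>k z. - (1/2) * (\<Sum>l\<in>UNIV. \<theta> $ k $ l * sp l f z) * J0 (t, z)),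
         fP0 = (\<lambda>z. 0), fP = (\<lambda>i z. - sp i f z)\<rparr>"

lemma sf: "smooth_fn f" using f_test by (rule test_smooth)

lemma DF_cont: "cont_state DF"
proof -
  have "smooth_fn (\<lambda>z. - (1/2) * (\<Sum>l\<in>UNIV. \<theta> $ k $ l * sp l f z) * J0 (t, z))" for k
    using sf smooth_slice[OF J0_smooth] by (intro smooth_mult smooth_sum smooth_const smooth_sp) auto
  moreover have "smooth_fn (\<lambda>z. - sp i f z)" for i by (intro smooth_uminus smooth_sp sf)
  ultimately show ?thesis unfolding cont_state_def DF_def by (auto intro: smooth_cont)
qed

lemma F_weak:
  assumes d: "test_state d"
  shows "integral UNIV (\<lambda>x. f x * (phi2 \<theta> J0 t d x + J0 (t, x))) = pair_state DF d"
proof -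
  have sd: "smooth_state d" using d by (rule test_state_smooth)
  have tp: "test_fn (fP d i)" for i using d by (auto simp: test_state_def)
  have ta: "test_fn (fA d k)" for k using d by (auto simp: test_state_def)
  have sp': "smooth_fn (fP d i)" for i using tp by (rule test_smooth)
  have sJ: "smooth_fn (\<lambda>z. J0 (t, z))" by (rule smooth_slice[OF J0_smooth])
  have sa: "smooth_fn (\<lambda>y. fA d k y * J0 (t, y))" for k using ta sJ by (intro smooth_mult) (auto intro: test_smooth)
  have T1: "test_fn (\<lambda>x. f x * sp i (fP d i) x)" for i by (intro test_mult_left f_test smooth_sp sp')
  have T2: "test_fn (\<lambda>x. f x * sp l (\<lambda>y. fA d k y * J0 (t, y)) x)" for k l by (intro test_mult_left f_test smooth_sp sa)
  have T3: "test_fn (\<lambda>x. sp i f x * fP d i x)" for i by (intro test_mult_left test_sp f_test sp')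
  have T4: "test_fn (\<lambda>x. sp l f x * (fA d k x * J0 (t, x)))" for k l by (intro test_mult_left test_sp f_test sa)
  have "integral UNIV (\<lambda>x. f x * (phi2 \<theta> J0 t d x + J0 (t, x)))
     = integral UNIV (\<lambda>x. (\<Sum>i\<in>UNIV. f x * sp i (fP d i) x)
          + (1/2) * (\<Sum>k\<in>UNIV. \<Sum>l\<in>UNIV. \<theta> $ k $ l * (f x * sp l (\<lambda>y. fA d k y * J0 (t, y)) x)))"
    by (simp add: phi2_def sum_distrib_left algebra_simps)
  also have "\<dots> = (\<Sum>i\<in>UNIV. integral UNIV (\<lambda>x. f x * sp i (fP d i) x))
          + (1/2) * (\<Sum>k\<in>UNIV. \<Sum>l\<in>UNIV. \<theta> $ k $ l * integral UNIV (\<lambda>x. f x * sp l (\<lambda>y. fA d k y * J0 (t, y)) x))"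
  proof -
    have tA: "test_fn (\<lambda>x. \<Sum>i\<in>UNIV. f x * sp i (fP d i) x)" by (rule test_sum_UNIV[OF T1])
    have tB: "test_fn (\<lambda>x. \<Sum>k\<in>UNIV. \<Sum>l\<in>UNIV. \<theta> $ k $ l * (f x * sp l (\<lambda>y. fA d k y * J0 (t, y)) x))"
      by (intro test_sum_UNIV test_cmult T2)
    show ?thesis unfolding int_add_c[OF tA tB] int_sum_UNIV[OF T1] int_sum2_c[OF T2] ..
  qed
  also have "\<dots> = - (\<Sum>i\<in>UNIV. integral UNIV (\<lambda>x. sp i f x * fP d i x))
          - (1/2) * (\<Sum>k\<in>UNIV. \<Sum>l\<in>UNIV. \<theta> $ k $ l * integral UNIV (\<lambda>x. sp l f x * (fA d k x * J0 (t, x))))"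
    by (simp add: ibp_test_left[OF f_test sp'] ibp_test_left[OF f_test sa] sum_negf sum_distrib_left)
  also have "\<dots> = integral UNIV (\<lambda>x. (\<Sum>i\<in>UNIV. (-1) * (sp i f x * fP d i x))
          + (- (1/2)) * (\<Sum>k\<in>UNIV. \<Sum>l\<in>UNIV. \<theta> $ k $ l * (sp l f x * (fA d k x * J0 (t, x)))))"
  proof -
    have tA: "test_fn (\<lambda>x. \<Sum>i\<in>UNIV. (-1) * (sp i f x * fP d i x))" by (intro test_sum_UNIV test_cmult T3)
    have tB: "test_fn (\<lambda>x. \<Sum>k\<in>UNIV. \<Sum>l\<in>UNIV. \<theta> $ k $ l * (sp l f x * (fA d k x * J0 (t, x))))"
      by (intro test_sum_UNIV test_cmult T4)
    show ?thesis unfolding int_add_c[OF tA tB] int_sum1_c[OF T3] int_sum2_c[OF T4]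
      by (simp add: sum_negf)
  qed
  also have "\<dots> = pair_state DF d"
    unfolding pair_state_def DF_def
    by (rule arg_cong[where f="integral UNIV"]) (simp add: sum_distrib_left sum_distrib_right algebra_simps)
  finally show ?thesis .
qed

end


lemma int_add3: "test_fn h1 \<Longrightarrow> test_fn h2 \<Longrightarrow> test_fn h3 \<Longrightarrow>
   integral UNIV (\<lambda>x. h1 x + h2 x + c * h3 x) = integral UNIV h1 + integral UNIV h2 + c * integral UNIV h3"
  by (subst int_add_c) (auto intro: test_add simp: int_add)

lemma sum_swap3: "(\<Sum>l\<in>(UNIV::3 set). \<Sum>i\<in>(UNIV::3 set). \<Sum>k\<in>(UNIV::3 set). F l i k)
   = (\<Sum>k\<in>UNIV. \<Sum>l\<in>UNIV. \<Sum>i\<in>UNIV. F l i k :: real)"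
proof -
  have "(\<Sum>l\<in>(UNIV::3 set). \<Sum>i\<in>(UNIV::3 set). \<Sum>k\<in>(UNIV::3 set). F l i k)
      = (\<Sum>l\<in>(UNIV::3 set). \<Sum>k\<in>(UNIV::3 set). \<Sum>i\<in>(UNIV::3 set). F l i k)"
    by (rule sum.cong[OF refl]) (rule sum.swap)
  also have "\<dots> = (\<Sum>k\<in>UNIV. \<Sum>l\<in>UNIV. \<Sum>i\<in>UNIV. F l i k)" by (rule sum.swap)
  finally show ?thesis .
qed

context
  fixes \<theta> :: "real^3^3"
    and J0 :: "real \<times> (real^3) \<Rightarrow> real" and J :: "3 \<Rightarrow> real \<times> (real^3) \<Rightarrow> real"
    and t :: real and g :: "real^3 \<Rightarrow> real"
  assumes J0_smooth: "smooth_fn J0" and J_smooth: "\<And>k. smooth_fn (J k)"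
    and g_test: "test_fn g"
begin

definition DG :: fstate where
  "DG = \<lparr>fA0 = (\<lambda>z. - (\<Sum>l\<in>UNIV. \<Sum>i\<in>UNIV. \<theta> $ l $ i * sp l (\<lambda>z. g z * sp i (\<lambda>z. J0 (t, z)) z) z)),
         fA = (\<lambda>k z. (\<Sum>l\<in>UNIV. \<Sum>i\<in>UNIV. \<theta> $ l $ i * sp l (\<lambda>z. sp i g z * J k (t, z)) z)
                + (1/2) * (\<Sum>i\<in>UNIV. \<theta> $ i $ k * sp i g z) * divJ J0 J (t, z)),
         fP0 = (\<lambda>z. 0), fP = (\<lambda>i z. 0)\<rparr>"

lemma sg: "smooth_fn g" using g_test by (rule test_smooth)
lemma sJ0: "smooth_fn (\<lambda>z. J0 (t, z))" by (rule smooth_slice[OF J0_smooth])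
lemma sJ: "smooth_fn (\<lambda>z. J k (t, z))" by (rule smooth_slice[OF J_smooth])
lemma sC: "smooth_fn (\<lambda>z. divJ J0 J (t, z))" by (rule smooth_divJ[OF J0_smooth J_smooth])

lemma DG_cont: "cont_state DG"
proof -
  have "smooth_fn (\<lambda>z. - (\<Sum>l\<in>UNIV. \<Sum>i\<in>UNIV. \<theta> $ l $ i * sp l (\<lambda>z. g z * sp i (\<lambda>z. J0 (t, z)) z) z))"
    using sg sJ0 by (intro smooth_uminus smooth_sum smooth_mult smooth_const smooth_sp) auto
  moreover have "smooth_fn (\<lambda>z. (\<Sum>l\<in>UNIV. \<Sum>i\<in>UNIV. \<theta> $ l $ i * sp l (\<lambda>z. sp i g z * J k (t, z)) z)
                + (1/2) * (\<Sum>i\<in>UNIV. \<theta> $ i $ k * sp i g z) * divJ J0 J (t, z))" for k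
    using sg sJ sC by (intro smooth_add smooth_sum smooth_mult smooth_const smooth_sp) auto
  ultimately show ?thesis unfolding cont_state_def DG_def by (auto intro: smooth_cont)
qed

lemma DG_P: "fP0 DG = (\<lambda>z. 0)" "fP DG = (\<lambda>i z. 0)" by (simp_all add: DG_def)

lemma G_weak:
  assumes d: "test_state d"
  shows "integral UNIV (\<lambda>y. g y * (Phi3 \<theta> J0 J t d y + divJ J0 J (t, y))) = pair_state DG d"
proof -
  define J0t where "J0t = (\<lambda>z. J0 (t, z))"
  define Ct where "Ct = (\<lambda>z. divJ J0 J (t, z))"
  have sJ0t: "smooth_fn J0t" unfolding J0t_def by (rule sJ0)
  have sCt: "smooth_fn Ct" unfolding Ct_def by (rule sC)
  have t0: "test_fn (fA0 d)" and ta: "test_fn (fA d k)" for k using d by (auto simp: test_state_def)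
  have s0: "smooth_fn (fA0 d)" and sa: "smooth_fn (fA d k)" for k using t0 ta by (auto intro: test_smooth)
  have Ta: "test_fn (\<lambda>y. g y * (sp i J0t y * sp l (fA0 d) y))" for l i
    using g_test sJ0t s0 by (intro test_mult_left smooth_mult smooth_sp) auto
  have Tb: "test_fn (\<lambda>y. g y * sp i (\<lambda>z. J k (t, z) * sp l (fA d k) z) y)" for l i k
    using g_test sJ sa by (intro test_mult_left smooth_mult smooth_sp) auto
  have Tc: "test_fn (\<lambda>y. g y * sp i (\<lambda>z. fA d l z * Ct z) y)" for i l
    using g_test sCt sa by (intro test_mult_left smooth_mult smooth_sp) auto
  have "integral UNIV (\<lambda>y. g y * (Phi3 \<theta> J0 J t d y + divJ J0 J (t, y)))
     = integral UNIV (\<lambda>y. (\<Sum>l\<in>UNIV. \<Sum>i\<in>UNIV. \<theta> $ l $ i * (g y * (sp i J0t y * sp l (fA0 d) y)))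
        + (\<Sum>l\<in>UNIV. \<Sum>i\<in>UNIV. \<Sum>k\<in>UNIV. \<theta> $ l $ i * (g y * sp i (\<lambda>z. J k (t, z) * sp l (fA d k) z) y))
        + (- (1/2)) * (\<Sum>i\<in>UNIV. \<Sum>l\<in>UNIV. \<theta> $ i $ l * (g y * sp i (\<lambda>z. fA d l z * Ct z) y)))"
    by (simp add: Phi3_def J0t_def Ct_def sum_distrib_left algebra_simps sum_negf)
  also have "\<dots> = (\<Sum>l\<in>UNIV. \<Sum>i\<in>UNIV. \<theta> $ l $ i * integral UNIV (\<lambda>y. g y * (sp i J0t y * sp l (fA0 d) y)))
        + (\<Sum>l\<in>UNIV. \<Sum>i\<in>UNIV. \<Sum>k\<in>UNIV. \<theta> $ l $ i * integral UNIV (\<lambda>y. g y * sp i (\<lambda>z. J k (t, z) * sp l (fA d k) z) y))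
        + (- (1/2)) * (\<Sum>i\<in>UNIV. \<Sum>l\<in>UNIV. \<theta> $ i $ l * integral UNIV (\<lambda>y. g y * sp i (\<lambda>z. fA d l z * Ct z) y))"
  proof -
    have tA: "test_fn (\<lambda>y. \<Sum>l\<in>UNIV. \<Sum>i\<in>UNIV. \<theta> $ l $ i * (g y * (sp i J0t y * sp l (fA0 d) y)))"
      by (intro test_sum_UNIV test_cmult Ta)
    have tB: "test_fn (\<lambda>y. \<Sum>l\<in>UNIV. \<Sum>i\<in>UNIV. \<Sum>k\<in>UNIV. \<theta> $ l $ i * (g y * sp i (\<lambda>z. J k (t, z) * sp l (fA d k) z) y))"
      by (intro test_sum_UNIV test_cmult Tb)
    have tC: "test_fn (\<lambda>y. \<Sum>i\<in>UNIV. \<Sum>l\<in>UNIV. \<theta> $ i $ l * (g y * sp i (\<lambda>z. fA d l z * Ct z) y))"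
      by (intro test_sum_UNIV test_cmult Tc)
    show ?thesis unfolding int_add3[OF tA tB tC] int_sum2_c[OF Ta] int_sum3_c[OF Tb] int_sum2_c[OF Tc] ..
  qed
  also have "\<dots> = - (\<Sum>l\<in>UNIV. \<Sum>i\<in>UNIV. \<theta> $ l $ i * integral UNIV (\<lambda>z. sp l (\<lambda>z. g z * sp i J0t z) z * fA0 d z))
        + (\<Sum>l\<in>UNIV. \<Sum>i\<in>UNIV. \<Sum>k\<in>UNIV. \<theta> $ l $ i * integral UNIV (\<lambda>z. sp l (\<lambda>z. sp i g z * J k (t, z)) z * fA d k z))
        + (1/2) * (\<Sum>i\<in>UNIV. \<Sum>l\<in>UNIV. \<theta> $ i $ l * integral UNIV (\<lambda>z. sp i g z * (fA d l z * Ct z)))"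
  proof -
    have a: "integral UNIV (\<lambda>y. g y * (sp i J0t y * sp l (fA0 d) y))
        = - integral UNIV (\<lambda>z. sp l (\<lambda>z. g z * sp i J0t z) z * fA0 d z)" for l i
    proof -
      have u: "test_fn (\<lambda>z. g z * sp i J0t z)" using g_test sJ0t by (intro test_mult_left smooth_sp)
      have "integral UNIV (\<lambda>y. g y * (sp i J0t y * sp l (fA0 d) y))
          = integral UNIV (\<lambda>y. (g y * sp i J0t y) * sp l (fA0 d) y)" by (simp add: mult.assoc)
      also have "\<dots> = - integral UNIV (\<lambda>z. sp l (\<lambda>z. g z * sp i J0t z) z * fA0 d z)"
        by (rule ibp_test_left[OF u s0])
      finally show ?thesis .
    qed
    have b: "integral UNIV (\<lambda>y. g y * sp i (\<lambda>z. J k (t, z) * sp l (fA d k) z) y)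
        = integral UNIV (\<lambda>z. sp l (\<lambda>z. sp i g z * J k (t, z)) z * fA d k z)" for l i k
    proof -
      have p: "smooth_fn (\<lambda>z. J k (t, z) * sp l (fA d k) z)" using sJ sa by (intro smooth_mult smooth_sp)
      have u: "smooth_fn (\<lambda>z. sp i g z * J k (t, z))" using sg sJ by (intro smooth_mult smooth_sp)
      have "integral UNIV (\<lambda>y. g y * sp i (\<lambda>z. J k (t, z) * sp l (fA d k) z) y)
          = - integral UNIV (\<lambda>y. sp i g y * (J k (t, y) * sp l (fA d k) y))"
        by (rule ibp_test_left[OF g_test p])
      also have "\<dots> = - integral UNIV (\<lambda>y. (sp i g y * J k (t, y)) * sp l (fA d k) y)" by (simp add: mult.assoc)
      also have "\<dots> = integral UNIV (\<lambda>z. sp l (\<lambda>z. sp i g z * J k (t, z)) z * fA d k z)"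
        using ibp_test_right[OF u ta, of l] by simp
      finally show ?thesis .
    qed
    have c: "integral UNIV (\<lambda>y. g y * sp i (\<lambda>z. fA d l z * Ct z) y)
        = - integral UNIV (\<lambda>z. sp i g z * (fA d l z * Ct z))" for i l
      by (rule ibp_test_left[OF g_test]) (intro smooth_mult sa sCt)
    show ?thesis unfolding a b c by (simp add: sum_negf sum_distrib_left)
  qed
  also have "\<dots> = integral UNIV (\<lambda>z. (\<Sum>l\<in>UNIV. \<Sum>i\<in>UNIV. (- \<theta> $ l $ i) * (sp l (\<lambda>z. g z * sp i J0t z) z * fA0 d z))
        + (\<Sum>k\<in>UNIV. \<Sum>l\<in>UNIV. \<Sum>i\<in>UNIV. \<theta> $ l $ i * (sp l (\<lambda>z. sp i g z * J k (t, z)) z * fA d k z))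
        + (1/2) * (\<Sum>k\<in>UNIV. \<Sum>i\<in>UNIV. \<theta> $ i $ k * (sp i g z * (fA d k z * Ct z))))"
  proof -
    have K1: "test_fn (\<lambda>z. sp l (\<lambda>z. g z * sp i J0t z) z * fA0 d z)" for l i
      using sg sJ0t t0 by (intro test_mult_right smooth_sp smooth_mult)
    have K2: "test_fn (\<lambda>z. sp l (\<lambda>z. sp i g z * J k (t, z)) z * fA d k z)" for k l i
      using sg sJ ta by (intro test_mult_right smooth_sp smooth_mult)
    have K3: "test_fn (\<lambda>z. sp i g z * (fA d k z * Ct z))" for k i
      using g_test sa sCt by (intro test_mult_left test_sp smooth_mult)
    have tA: "test_fn (\<lambda>z. \<Sum>l\<in>UNIV. \<Sum>i\<in>UNIV. (- \<theta> $ l $ i) * (sp l (\<lambda>z. g z * sp i J0t z) z * fA0 d z))"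
      by (intro test_sum_UNIV test_cmult K1)
    have tB: "test_fn (\<lambda>z. \<Sum>k\<in>UNIV. \<Sum>l\<in>UNIV. \<Sum>i\<in>UNIV. \<theta> $ l $ i * (sp l (\<lambda>z. sp i g z * J k (t, z)) z * fA d k z))"
      by (intro test_sum_UNIV test_cmult K2)
    have tC: "test_fn (\<lambda>z. \<Sum>k\<in>UNIV. \<Sum>i\<in>UNIV. \<theta> $ i $ k * (sp i g z * (fA d k z * Ct z)))"
      by (intro test_sum_UNIV test_cmult K3)
    have s3: "(\<Sum>l\<in>UNIV. \<Sum>i\<in>UNIV. \<Sum>k\<in>UNIV. \<theta> $ l $ i * integral UNIV (\<lambda>z. sp l (\<lambda>z. sp i g z * J k (t, z)) z * fA d k z))
       = (\<Sum>k\<in>UNIV. \<Sum>l\<in>UNIV. \<Sum>i\<in>UNIV. \<theta> $ l $ i * integral UNIV (\<lambda>z. sp l (\<lambda>z. sp i g z * J k (t, z)) z * fA d k z))"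
      by (rule sum_swap3)
    have s2: "(\<Sum>i\<in>UNIV. \<Sum>l\<in>UNIV. \<theta> $ i $ l * integral UNIV (\<lambda>z. sp i g z * (fA d l z * Ct z)))
       = (\<Sum>k\<in>UNIV. \<Sum>i\<in>UNIV. \<theta> $ i $ k * integral UNIV (\<lambda>z. sp i g z * (fA d k z * Ct z)))"
      by (rule sum.swap)
    show ?thesis unfolding int_add3[OF tA tB tC] int_sum2_c[OF K1] int_sum3_c[OF K2] int_sum2_c[OF K3] s3 s2
      by (simp add: sum_negf)
  qed
  also have "\<dots> = pair_state DG d"
    unfolding pair_state_def DG_def
    by (rule arg_cong[where f="integral UNIV"]) (simp add: J0t_def Ct_def sum_distrib_left sum_distrib_right sum.distrib sum_negf algebra_simps)
  finally show ?thesis .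
qed

end


lemma antisym_sym_zero:
  fixes \<theta> :: "real^3^3"
  assumes antisym: "\<And>i j. \<theta> $ i $ j = - \<theta> $ j $ i" and sym: "\<And>a b. X a b = X b a"
  shows "(\<Sum>a\<in>UNIV. \<Sum>b\<in>UNIV. \<theta> $ a $ b * X a b) = 0"
proof -
  let ?S = "(\<Sum>a\<in>UNIV. \<Sum>b\<in>UNIV. \<theta> $ a $ b * X a b)"
  have "?S = (\<Sum>b\<in>UNIV. \<Sum>a\<in>UNIV. \<theta> $ a $ b * X a b)" by (rule sum.swap)
  also have "\<dots> = (\<Sum>b\<in>UNIV. \<Sum>a\<in>UNIV. - (\<theta> $ b $ a * X b a))"
  proof (rule sum.cong[OF refl], rule sum.cong[OF refl])
    fix a b
    show "\<theta> $ a $ b * X a b = - (\<theta> $ b $ a * X b a)" using antisym[of a b] sym[of a b] by simp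
  qed
  also have "\<dots> = - ?S" by (simp add: sum_negf)
  finally show ?thesis by simp
qed

lemma sp_mult_fun: "smooth_fn a \<Longrightarrow> smooth_fn b \<Longrightarrow> sp i (\<lambda>x. a x * b x) = (\<lambda>x. sp i a x * b x + a x * sp i b x)"
  unfolding sp_def by (rule dd_mult_fun) (auto intro: smooth_diff)

lemma pointwise_main:
  fixes \<theta> :: "real^3^3"
    and J0 :: "real \<times> (real^3) \<Rightarrow> real" and J :: "3 \<Rightarrow> real \<times> (real^3) \<Rightarrow> real"
    and t :: real and f :: "real^3 \<Rightarrow> real"
  assumes antisym: "\<And>i j. \<theta> $ i $ j = - \<theta> $ j $ i"
    and J0_smooth: "smooth_fn J0" and J_smooth: "\<And>k. smooth_fn (J k)"
    and sf: "smooth_fn f"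
  shows "Phi3 \<theta> J0 J t \<lparr>fA0 = (\<lambda>z. 0), fA = (\<lambda>i. sp i f), fP0 = (\<lambda>z. 0), fP = (\<lambda>i z. 0)\<rparr> y + divJ J0 J (t, y)
    = (\<Sum>l\<in>UNIV. \<Sum>k\<in>UNIV. Sigma \<theta> J t l k y * sp l (sp k f) y)
        - (1/2) * (\<Sum>i\<in>UNIV. \<Sum>l\<in>UNIV. \<theta> $ i $ l * sp i (\<lambda>z. divJ J0 J (t, z)) y * sp l f y)"
proof -
  define Jt where "Jt k = (\<lambda>z. J k (t, z))" for k
  define Ct where "Ct = (\<lambda>z. divJ J0 J (t, z))"
  define H where "H l k = sp l (sp k f)" for l k
  define T where "T l k = (\<Sum>i\<in>UNIV. \<theta> $ l $ i * sp i (Jt k) y)" for l k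
  have sJt: "smooth_fn (Jt k)" for k unfolding Jt_def by (rule smooth_slice[OF J_smooth])
  have sCt: "smooth_fn Ct" unfolding Ct_def by (rule smooth_divJ[OF J0_smooth J_smooth])
  have sH: "smooth_fn (H l k)" for l k unfolding H_def by (intro smooth_sp sf)
  have Hsym: "H l k = H k l" for l k unfolding H_def by (rule schwarz_sp[OF sf])
  have e0: "sp l (\<lambda>z. 0) = (\<lambda>z. 0)" for l unfolding sp_def by (rule dd_const_fun)
  have e1: "sp i (\<lambda>z. Jt k z * H l k z) = (\<lambda>z. sp i (Jt k) z * H l k z + Jt k z * sp i (H l k) z)" for i k l
    by (rule sp_mult_fun[OF sJt sH])
  have e2: "sp i (\<lambda>z. sp l f z * Ct z) = (\<lambda>z. sp i (sp l f) z * Ct z + sp l f z * sp i Ct z)" for i l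
    by (rule sp_mult_fun[OF smooth_sp[OF sf] sCt])
  have A2: "(\<Sum>l\<in>UNIV. \<Sum>i\<in>UNIV. \<Sum>k\<in>UNIV. \<theta> $ l $ i * (Jt k y * sp i (H l k) y)) = 0"
  proof -
    have "(\<Sum>l\<in>UNIV. \<Sum>i\<in>UNIV. \<Sum>k\<in>UNIV. \<theta> $ l $ i * (Jt k y * sp i (H l k) y))
        = (\<Sum>k\<in>UNIV. \<Sum>l\<in>UNIV. \<Sum>i\<in>UNIV. \<theta> $ l $ i * (Jt k y * sp i (H l k) y))" by (rule sum_swap3)
    also have "\<dots> = (\<Sum>k\<in>UNIV. Jt k y * (\<Sum>l\<in>UNIV. \<Sum>i\<in>UNIV. \<theta> $ l $ i * sp i (sp l (sp k f)) y))"
      by (simp add: sum_distrib_left H_def algebra_simps)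
    also have "\<dots> = 0"
    proof -
      have "(\<Sum>l\<in>UNIV. \<Sum>i\<in>UNIV. \<theta> $ l $ i * sp i (sp l (sp k f)) y) = 0" for k
        by (rule antisym_sym_zero[OF antisym]) (simp add: schwarz_sp[OF smooth_sp[OF sf]])
      then show ?thesis by simp
    qed
    finally show ?thesis .
  qed
  have B1: "(\<Sum>i\<in>UNIV. \<Sum>l\<in>UNIV. \<theta> $ i $ l * (sp i (sp l f) y * Ct y)) = 0"
  proof -
    have "(\<Sum>i\<in>UNIV. \<Sum>l\<in>UNIV. \<theta> $ i $ l * (sp i (sp l f) y * Ct y))
        = Ct y * (\<Sum>i\<in>UNIV. \<Sum>l\<in>UNIV. \<theta> $ i $ l * sp i (sp l f) y)"
      by (simp add: sum_distrib_left algebra_simps)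
    also have "(\<Sum>i\<in>UNIV. \<Sum>l\<in>UNIV. \<theta> $ i $ l * sp i (sp l f) y) = 0"
      by (rule antisym_sym_zero[OF antisym]) (simp add: schwarz_sp[OF sf])
    finally show ?thesis by simp
  qed
  have A1: "(\<Sum>l\<in>UNIV. \<Sum>i\<in>UNIV. \<Sum>k\<in>UNIV. \<theta> $ l $ i * (sp i (Jt k) y * H l k y))
      = (\<Sum>l\<in>UNIV. \<Sum>k\<in>UNIV. Sigma \<theta> J t l k y * H l k y)"
  proof -
    have S: "Sigma \<theta> J t l k y = (1/2) * (T l k + T k l)" for l k
      by (simp add: Sigma_def T_def Jt_def sum.distrib)
    have sw: "(\<Sum>l\<in>UNIV. \<Sum>k\<in>UNIV. T k l * H l k y) = (\<Sum>l\<in>UNIV. \<Sum>k\<in>UNIV. T l k * H l k y)"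
    proof -
      have "(\<Sum>l\<in>UNIV. \<Sum>k\<in>UNIV. T k l * H l k y) = (\<Sum>k\<in>UNIV. \<Sum>l\<in>UNIV. T k l * H l k y)" by (rule sum.swap)
      also have "\<dots> = (\<Sum>k\<in>UNIV. \<Sum>l\<in>UNIV. T k l * H k l y)" using Hsym by simp
      finally show ?thesis .
    qed
    have "(\<Sum>l\<in>UNIV. \<Sum>k\<in>UNIV. Sigma \<theta> J t l k y * H l k y)
        = (1/2) * (\<Sum>l\<in>UNIV. \<Sum>k\<in>UNIV. T l k * H l k y) + (1/2) * (\<Sum>l\<in>UNIV. \<Sum>k\<in>UNIV. T k l * H l k y)"
      by (simp add: S sum_distrib_left sum.distrib algebra_simps)
    also have "\<dots> = (\<Sum>l\<in>UNIV. \<Sum>k\<in>UNIV. T l k * H l k y)" unfolding sw by simp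
    also have "\<dots> = (\<Sum>l\<in>UNIV. \<Sum>i\<in>UNIV. \<Sum>k\<in>UNIV. \<theta> $ l $ i * (sp i (Jt k) y * H l k y))"
    proof -
      have "(\<Sum>k\<in>UNIV. T l k * H l k y) = (\<Sum>i\<in>UNIV. \<Sum>k\<in>UNIV. \<theta> $ l $ i * (sp i (Jt k) y * H l k y))" for l
      proof -
        have "(\<Sum>k\<in>UNIV. T l k * H l k y) = (\<Sum>k\<in>UNIV. \<Sum>i\<in>UNIV. \<theta> $ l $ i * (sp i (Jt k) y * H l k y))"
          unfolding T_def by (simp add: sum_distrib_right mult.assoc)
        also have "\<dots> = (\<Sum>i\<in>UNIV. \<Sum>k\<in>UNIV. \<theta> $ l $ i * (sp i (Jt k) y * H l k y))" by (rule sum.swap)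
        finally show ?thesis .
      qed
      then show ?thesis by simp
    qed
    finally show ?thesis by simp
  qed
  have LHS: "Phi3 \<theta> J0 J t \<lparr>fA0 = (\<lambda>z. 0), fA = (\<lambda>i. sp i f), fP0 = (\<lambda>z. 0), fP = (\<lambda>i z. 0)\<rparr> y + divJ J0 J (t, y)
     = (\<Sum>l\<in>UNIV. \<Sum>i\<in>UNIV. \<Sum>k\<in>UNIV. \<theta> $ l $ i * (sp i (Jt k) y * H l k y))
       + (\<Sum>l\<in>UNIV. \<Sum>i\<in>UNIV. \<Sum>k\<in>UNIV. \<theta> $ l $ i * (Jt k y * sp i (H l k) y))
       - (1/2) * (\<Sum>i\<in>UNIV. \<Sum>l\<in>UNIV. \<theta> $ i $ l * (sp i (sp l f) y * Ct y))
       - (1/2) * (\<Sum>i\<in>UNIV. \<Sum>l\<in>UNIV. \<theta> $ i $ l * (sp l f y * sp i Ct y))"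
  proof -
    have "Phi3 \<theta> J0 J t \<lparr>fA0 = (\<lambda>z. 0), fA = (\<lambda>i. sp i f), fP0 = (\<lambda>z. 0), fP = (\<lambda>i z. 0)\<rparr> y + divJ J0 J (t, y)
      = (\<Sum>l\<in>UNIV. \<Sum>i\<in>UNIV. \<Sum>k\<in>UNIV. \<theta> $ l $ i * sp i (\<lambda>z. Jt k z * H l k z) y)
        - (1/2) * (\<Sum>i\<in>UNIV. \<Sum>l\<in>UNIV. \<theta> $ i $ l * sp i (\<lambda>z. sp l f z * Ct z) y)"
      by (simp add: Phi3_def e0 Jt_def H_def Ct_def)
    then show ?thesis unfolding e1 e2
      by (simp add: sum.distrib distrib_left algebra_simps)
  qed
  show ?thesis unfolding LHS A1 A2 B1
    by (simp add: Ct_def H_def algebra_simps)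
qed


theorem mainTheorem5:
  fixes \<theta> :: "real^3^3"
    and J0 :: "real \<times> (real^3) \<Rightarrow> real" and J :: "3 \<Rightarrow> real \<times> (real^3) \<Rightarrow> real"
    and t :: real and s :: fstate and f g :: "real^3 \<Rightarrow> real"
  assumes antisym: "\<And>i j. \<theta> $ i $ j = - \<theta> $ j $ i"
    and J0_smooth: "smooth_fn J0" and J_smooth: "\<And>k. smooth_fn (J k)"
    and s_smooth: "smooth_state s"
    and f_test: "test_fn f" and g_test: "test_fn g"
  shows "pbracket (smear f (phi2 \<theta> J0 t)) (smear g (Phi3 \<theta> J0 J t)) s =
    integral UNIV (\<lambda>y. g y *
       ((\<Sum>l\<in>UNIV. \<Sum>k\<in>UNIV. Sigma \<theta> J t l k y * sp l (sp k f) y)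
        - (1/2) * (\<Sum>i\<in>UNIV. \<Sum>l\<in>UNIV.
             \<theta> $ i $ l * sp i (\<lambda>z. divJ J0 J (t, z)) y * sp l f y)))"
proof -
  define F where "F = smear f (phi2 \<theta> J0 t)"
  define G where "G = smear g (Phi3 \<theta> J0 J t)"
  define DFs where "DFs = DF \<theta> J0 t f"
  define DGs where "DGs = DG \<theta> J0 J t g"
  have sJ0: "smooth_fn (\<lambda>z. J0 (t, z))" by (rule smooth_slice[OF J0_smooth])
  have sC: "smooth_fn (\<lambda>z. divJ J0 J (t, z))" by (rule smooth_divJ[OF J0_smooth J_smooth])
  have gF: "is_fgrad F s DFs"
    unfolding is_fgrad_def
  proof (intro conjI allI impI)
    show "cont_state DFs" unfolding DFs_def by (rule DF_cont[OF J0_smooth J_smooth f_test])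
    fix d assume d: "test_state d"
    have sd: "smooth_state d" using d by (rule test_state_smooth)
    have "((\<lambda>e. F (shift_state s e d)) has_real_derivative
        integral UNIV (\<lambda>x. f x * (phi2 \<theta> J0 t d x + J0 (t, x)))) (at 0)"
      unfolding F_def
    proof (rule smear_deriv[where L="\<lambda>x. phi2 \<theta> J0 t d x + J0 (t, x)"])
      show "\<And>e x. phi2 \<theta> J0 t (shift_state s e d) x = phi2 \<theta> J0 t s x + e * (phi2 \<theta> J0 t d x + J0 (t, x))"
        by (rule phi2_shift[OF J0_smooth J_smooth s_smooth sd])
      show "test_fn f" by (rule f_test)
      show "continuous_on UNIV (phi2 \<theta> J0 t s)"
        by (rule smooth_cont[OF smooth_phi2[OF J0_smooth J_smooth s_smooth]])
      show "continuous_on UNIV (\<lambda>x. phi2 \<theta> J0 t d x + J0 (t, x))"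
        by (rule smooth_cont[OF smooth_add[OF smooth_phi2[OF J0_smooth J_smooth sd] sJ0]])
    qed
    then show "((\<lambda>e. F (shift_state s e d)) has_real_derivative pair_state DFs d) (at 0)"
      unfolding DFs_def F_weak[OF J0_smooth J_smooth f_test d] .
  qed
  have gG: "is_fgrad G s DGs"
    unfolding is_fgrad_def
  proof (intro conjI allI impI)
    show "cont_state DGs" unfolding DGs_def by (rule DG_cont[OF J0_smooth J_smooth g_test])
    fix d assume d: "test_state d"
    have sd: "smooth_state d" using d by (rule test_state_smooth)
    have "((\<lambda>e. G (shift_state s e d)) has_real_derivative
        integral UNIV (\<lambda>y. g y * (Phi3 \<theta> J0 J t d y + divJ J0 J (t, y)))) (at 0)"
      unfolding G_def
    proof (rule smear_deriv[where L="\<lambda>y. Phi3 \<theta> J0 J t d y + divJ J0 J (t, y)"])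
      show "\<And>e x. Phi3 \<theta> J0 J t (shift_state s e d) x = Phi3 \<theta> J0 J t s x + e * (Phi3 \<theta> J0 J t d x + divJ J0 J (t, x))"
        by (rule Phi3_shift[OF J0_smooth J_smooth s_smooth sd])
      show "test_fn g" by (rule g_test)
      show "continuous_on UNIV (Phi3 \<theta> J0 J t s)"
        by (rule smooth_cont[OF smooth_Phi3[OF J0_smooth J_smooth s_smooth]])
      show "continuous_on UNIV (\<lambda>y. Phi3 \<theta> J0 J t d y + divJ J0 J (t, y))"
        by (rule smooth_cont[OF smooth_add[OF smooth_Phi3[OF J0_smooth J_smooth sd] sC]])
    qed
    then show "((\<lambda>e. G (shift_state s e d)) has_real_derivative pair_state DGs d) (at 0)"
      unfolding DGs_def G_weak[OF J0_smooth J_smooth g_test d] .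
  qed
  have fgF: "fgrad F s = DFs" by (rule fgrad_eq[OF gF])
  have fgG: "fgrad G s = DGs" by (rule fgrad_eq[OF gG])
  define df where "df = \<lparr>fA0 = (\<lambda>z. 0), fA = (\<lambda>i. sp i f), fP0 = (\<lambda>z. 0), fP = (\<lambda>i z. 0)\<rparr>"
  have tdf: "test_state df" unfolding df_def test_state_def by (auto intro: test_sp f_test)
  have "pbracket F G s = integral UNIV (\<lambda>z. \<Sum>i\<in>UNIV. fA DGs i z * sp i f z)"
    unfolding pbracket_def Let_def fgF fgG
    by (simp add: DFs_def DF_def[OF J0_smooth J_smooth f_test] DGs_def DG_P[OF J0_smooth J_smooth g_test] mult.commute)
  also have "\<dots> = pair_state DGs df"
    unfolding pair_state_def df_def by (simp add: DGs_def DG_P[OF J0_smooth J_smooth g_test])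
  also have "\<dots> = integral UNIV (\<lambda>y. g y * (Phi3 \<theta> J0 J t df y + divJ J0 J (t, y)))"
    unfolding DGs_def G_weak[OF J0_smooth J_smooth g_test tdf] ..
  also have "\<dots> = integral UNIV (\<lambda>y. g y *
       ((\<Sum>l\<in>UNIV. \<Sum>k\<in>UNIV. Sigma \<theta> J t l k y * sp l (sp k f) y)
        - (1/2) * (\<Sum>i\<in>UNIV. \<Sum>l\<in>UNIV.
             \<theta> $ i $ l * sp i (\<lambda>z. divJ J0 J (t, z)) y * sp l f y)))"
    unfolding df_def pointwise_main[OF antisym J0_smooth J_smooth test_smooth[OF f_test]] ..
  finally show ?thesis unfolding F_def G_def .
qed


end
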